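(* Let $T$, $\mathcal{S}=\mathcal{S}_+\cup\mathcal{S}_-$, $\Psi$, $U$, $\lambda,\mu$, $P_\lambda,P_\mu$ and $W$ be as in the context. Consider the discrete-time QBD on phase space $\mathcal{S}$ with transition blocks $$C'_{-1}=\frac12\begin{bmatrix}0&P_{\mu+-}\\0&P_{\mu--}\end{bmatrix},\quad C'_0=\frac12\begin{bmatrix}P_{\mu++}&P_{\lambda+-}\\P_{\mu-+}&P_{\lambda--}\end{bmatrix},\quad C'_1=\frac12\begin{bmatrix}P_{\lambda++}&0\\P_{\lambda-+}&0\end{bmatrix}.$$ Then it has the same $\mathcal{G}$-matrix as the QBD with blocks $$C_{-1}=\begin{bmatrix}0&(I-\mu^{-1}T_{++})^{-1}P_{\mu+-}\\0&W\end{bmatrix},\ C_0=\begin{bmatrix}0&(I-\mu^{-1}T_{++})^{-1}P_{\lambda+-}\\0&0\end{bmatrix},\ C_1=\begin{bmatrix}(I-\mu^{-1}T_{++})^{-1}P_{\lambda++}&0\\0&0\end{bmatrix};$$ that is, its $\mathcal{G}$-matrix equals $\begin{bmatrix}0&\Psi\\0&W\end{bmatrix}$.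
   Context: $T$ is the generator of a continuous-time Markov chain on a finite set $\mathcal{S}=\mathcal{S}_+\cup\mathcal{S}_-$ (disjoint, both nonempty), partitioned into blocks $T_{++},T_{+-},T_{-+},T_{--}$ according to $\mathcal{S}_\pm$. $\Psi$ is the minimal nonnegative solution of $T_{+-}+\Psi T_{--}+T_{++}\Psi+\Psi T_{-+}\Psi=0$ (the first-return probability matrix of the unit-rate fluid queue with phase generator $T$, rates $+1$ on $\mathcal{S}_+$ and $-1$ on $\mathcal{S}_-$), and $U:=T_{--}+T_{-+}\Psi$. $\lambda,\mu>0$ satisfy $\lambda,\mu\ge\max_i|T_{ii}|$; $P_\lambda:=I+\lambda^{-1}T$, $P_\mu:=I+\mu^{-1}T$ with blocks $P_{\lambda++}$ etc.; $W:=(I+\mu^{-1}U)(I-\lambda^{-1}U)^{-1}$. A discrete-time quasi-birth-death process (QBD) with transition blocks $L_{-1},L_0,L_1$ is a Markov chain $\{(Y_n,\kappa_n)\}$ on $\mathbb{Z}\times\mathcal{S}$ with $\mathbb{P}[Y_n=k+d,\kappa_n=j\mid Y_{n-1}=k,\kappa_{n-1}=i]=(L_d)_{ij}$ for $d\in\{-1,0,1\}$. Its $\mathcal{G}$-matrix has entries $\mathcal{G}_{ij}=\mathbb{P}[\theta<\infty,\kappa_\theta=j\mid Y_0=k,\kappa_0=i]$ with $\theta=\inf\{n>0:Y_n=k-1\}$. Matrices are partitioned into blocks according to $\mathcal{S}_+,\mathcal{S}_-$. *)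

theory Defs
  imports "Jordan_Normal_Form.Gauss_Jordan_Elimination"
begin

text \<open>Phase space S = {0..<p+q}; S_+ = {0..<p}, S_- = {p..<p+q}.
Blocks of an (p+q) x (p+q) matrix according to this partition.\<close>

definition blk_pp :: "nat \<Rightarrow> 'a mat \<Rightarrow> 'a mat" where
  "blk_pp p A = mat p p (\<lambda>(i,j). A $$ (i,j))"
definition blk_pm :: "nat \<Rightarrow> 'a mat \<Rightarrow> 'a mat" where
  "blk_pm p A = mat p (dim_col A - p) (\<lambda>(i,j). A $$ (i, j + p))"
definition blk_mp :: "nat \<Rightarrow> 'a mat \<Rightarrow> 'a mat" where
  "blk_mp p A = mat (dim_row A - p) p (\<lambda>(i,j). A $$ (i + p, j))"
definition blk_mm :: "nat \<Rightarrow> 'a mat \<Rightarrow> 'a mat" where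
  "blk_mm p A = mat (dim_row A - p) (dim_col A - p) (\<lambda>(i,j). A $$ (i + p, j + p))"

text \<open>Matrix inverse (the result is only meaningful for invertible matrices).\<close>
definition minv :: "'a::field mat \<Rightarrow> 'a mat" where
  "minv A = (case mat_inverse A of Some B \<Rightarrow> B | None \<Rightarrow> 0\<^sub>m (dim_row A) (dim_col A))"

definition is_generator :: "nat \<Rightarrow> real mat \<Rightarrow> bool" where
  "is_generator n T \<longleftrightarrow> T \<in> carrier_mat n n \<and>
     (\<forall>i<n. \<forall>j<n. i \<noteq> j \<longrightarrow> T $$ (i,j) \<ge> 0) \<and>
     (\<forall>i<n. (\<Sum>j<n. T $$ (i,j)) = 0)"

definition nonneg_mat :: "real mat \<Rightarrow> bool" where
  "nonneg_mat A \<longleftrightarrow> (\<forall>i<dim_row A. \<forall>j<dim_col A. A $$ (i,j) \<ge> 0)"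

definition le_mat :: "real mat \<Rightarrow> real mat \<Rightarrow> bool" where
  "le_mat A B \<longleftrightarrow> (\<forall>i<dim_row A. \<forall>j<dim_col A. A $$ (i,j) \<le> B $$ (i,j))"

definition riccati_sol :: "nat \<Rightarrow> real mat \<Rightarrow> real mat \<Rightarrow> bool" where
  "riccati_sol p T X \<longleftrightarrow> X \<in> carrier_mat p (dim_row T - p) \<and> nonneg_mat X \<and>
     blk_pm p T + X * blk_mm p T + blk_pp p T * X + X * blk_mp p T * X
       = 0\<^sub>m p (dim_row T - p)"

definition min_nonneg_riccati_sol :: "nat \<Rightarrow> real mat \<Rightarrow> real mat \<Rightarrow> bool" where
  "min_nonneg_riccati_sol p T Psi \<longleftrightarrow> riccati_sol p T Psi \<and>
     (\<forall>X. riccati_sol p T X \<longrightarrow> le_mat Psi X)"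

text \<open>Discrete-time QBD with blocks Lm (= L_{-1}), L0, L1 on phases {0..<n}.
  taboo Lm L0 L1 n k i l j = P[Y_k = l, kappa_k = j, Y_s >= 0 for all s <= k | Y_0 = 0, kappa_0 = i]
  (the chain started at level 0 and not yet having visited level -1).\<close>
definition qbd_step :: "real mat \<Rightarrow> real mat \<Rightarrow> real mat \<Rightarrow> int \<Rightarrow> nat \<Rightarrow> nat \<Rightarrow> real" where
  "qbd_step Lm L0 L1 d a b =
     (if d = -1 then Lm $$ (a,b) else if d = 0 then L0 $$ (a,b) else if d = 1 then L1 $$ (a,b) else 0)"

fun qbd_taboo :: "real mat \<Rightarrow> real mat \<Rightarrow> real mat \<Rightarrow> nat \<Rightarrow> nat \<Rightarrow> nat \<Rightarrow> int \<Rightarrow> nat \<Rightarrow> real" where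
  "qbd_taboo Lm L0 L1 n 0 i l j = (if l = 0 \<and> i = j then 1 else 0)"
| "qbd_taboo Lm L0 L1 n (Suc k) i l j =
     (if l < 0 then 0 else
      (\<Sum>l'\<in>{0..int k}. \<Sum>j'<n. qbd_taboo Lm L0 L1 n k i l' j' * qbd_step Lm L0 L1 (l - l') j' j))"

text \<open>G-matrix: G_ij = P[theta < infinity, kappa_theta = j | Y_0 = 0, kappa_0 = i],
  theta the first passage time to level -1, written as the sum over theta = k+1 of
  the first-passage probabilities.\<close>
definition qbd_G :: "nat \<Rightarrow> real mat \<Rightarrow> real mat \<Rightarrow> real mat \<Rightarrow> real mat" where
  "qbd_G n Lm L0 L1 = mat n n (\<lambda>(i,j).
     (\<Sum>k. \<Sum>j'<n. qbd_taboo Lm L0 L1 n k i 0 j' * Lm $$ (j', j)))"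

end

theory Submission
  imports Defs "Jordan_Normal_Form.Determinant"
begin

fun tb :: "nat \<Rightarrow> real mat \<Rightarrow> real mat \<Rightarrow> real mat \<Rightarrow> nat \<Rightarrow> nat \<Rightarrow> nat \<Rightarrow> nat \<Rightarrow> nat \<Rightarrow> real" where
  "tb n Lm L0 L1 0 m i l j = (if l = m \<and> i = j then 1 else 0)"
| "tb n Lm L0 L1 (Suc k) m i l j =
     (\<Sum>l'\<le>m+k. \<Sum>j'<n. tb n Lm L0 L1 k m i l' j' * qbd_step Lm L0 L1 (int l - int l') j' j)"

lemma qbd_step_out: "d \<noteq> -1 \<Longrightarrow> d \<noteq> 0 \<Longrightarrow> d \<noteq> 1 \<Longrightarrow> qbd_step Lm L0 L1 d a b = 0"
  by (simp add: qbd_step_def)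

lemma int_image_atMost: "int ` {..k} = {0..int k}"
proof
  show "int ` {..k} \<subseteq> {0..int k}" by auto
  show "{0..int k} \<subseteq> int ` {..k}"
  proof
    fix x assume "x \<in> {0..int k}"
    then have "x = int (nat x)" "nat x \<in> {..k}" by auto
    then show "x \<in> int ` {..k}" by blast
  qed
qed

lemma taboo_tb:
  "qbd_taboo Lm L0 L1 n k i l j = (if l < 0 then 0 else tb n Lm L0 L1 k 0 i (nat l) j)"
proof (induction k arbitrary: l j)
  case 0
  then show ?case by auto
next
  case (Suc k)
  show ?case
  proof (cases "l < 0")
    case True then show ?thesis by simp
  next
    case False
    have "qbd_taboo Lm L0 L1 n (Suc k) i l j =
      (\<Sum>l'\<in>int ` {..k}. \<Sum>j'<n. qbd_taboo Lm L0 L1 n k i l' j' * qbd_step Lm L0 L1 (l - l') j' j)"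
      using False by (simp add: int_image_atMost)
    also have "\<dots> = (\<Sum>l'\<in>{..k}. \<Sum>j'<n. qbd_taboo Lm L0 L1 n k i (int l') j' * qbd_step Lm L0 L1 (l - int l') j' j)"
      by (subst sum.reindex) auto
    also have "\<dots> = (\<Sum>l'\<le>k. \<Sum>j'<n. tb n Lm L0 L1 k 0 i l' j' * qbd_step Lm L0 L1 (int (nat l) - int l') j' j)"
      using False by (simp add: Suc.IH)
    finally show ?thesis using False by simp
  qed
qed

lemma tb_support: "l > m + k \<Longrightarrow> tb n Lm L0 L1 k m i l j = 0"
proof (induction k arbitrary: l j)
  case 0 then show ?case by simp
next
  case (Suc k)
  have Z: "qbd_step Lm L0 L1 (int l - int l') j' j = 0" if "l' \<le> m + k" for l' j'
    using that Suc.prems by (intro qbd_step_out) auto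
  then show ?case by (simp add: Z)
qed

lemma sum4_swap:
  fixes f :: "'c \<Rightarrow> 'd \<Rightarrow> real"
  shows "(\<Sum>a\<in>A. \<Sum>b\<in>B. (\<Sum>c\<in>C. \<Sum>d\<in>D. f c d * g c d a b) * h a b)
    = (\<Sum>c\<in>C. \<Sum>d\<in>D. f c d * (\<Sum>a\<in>A. \<Sum>b\<in>B. g c d a b * h a b))"
proof -
  have "(\<Sum>a\<in>A. \<Sum>b\<in>B. (\<Sum>c\<in>C. \<Sum>d\<in>D. f c d * g c d a b) * h a b)
     = (\<Sum>a\<in>A. \<Sum>b\<in>B. \<Sum>c\<in>C. \<Sum>d\<in>D. f c d * (g c d a b * h a b))"
    by (simp add: sum_distrib_right mult.assoc)
  also have "\<dots> = (\<Sum>a\<in>A. \<Sum>c\<in>C. \<Sum>d\<in>D. \<Sum>b\<in>B. f c d * (g c d a b * h a b))"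
    by (intro sum.cong refl) (subst sum.swap, intro sum.cong refl, rule sum.swap)
  also have "\<dots> = (\<Sum>c\<in>C. \<Sum>d\<in>D. \<Sum>a\<in>A. \<Sum>b\<in>B. f c d * (g c d a b * h a b))"
    by (subst sum.swap) (intro sum.cong refl, rule sum.swap)
  also have "\<dots> = (\<Sum>c\<in>C. \<Sum>d\<in>D. f c d * (\<Sum>a\<in>A. \<Sum>b\<in>B. g c d a b * h a b))"
    by (simp add: sum_distrib_left)
  finally show ?thesis .
qed

lemma tb_first:
  assumes "i < n" "j < n"
  shows "tb n Lm L0 L1 (Suc k) m i l j =
     (\<Sum>m'\<le>m+1. \<Sum>i'<n. qbd_step Lm L0 L1 (int m' - int m) i i' * tb n Lm L0 L1 k m' i' l j)"
  using assms
proof (induction k arbitrary: m i l j)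
  case 0
  have inner: "(\<Sum>j'<n. tb n Lm L0 L1 0 m i l' j' * qbd_step Lm L0 L1 (int l - int l') j' j)
      = (if l' = m then qbd_step Lm L0 L1 (int l - int m) i j else 0)" for l'
  proof -
    have "(\<Sum>j'<n. tb n Lm L0 L1 0 m i l' j' * qbd_step Lm L0 L1 (int l - int l') j' j)
       = (\<Sum>j'<n. if j' = i then (if l' = m then qbd_step Lm L0 L1 (int l - int l') i j else 0) else 0)"
      by (intro sum.cong refl) auto
    then show ?thesis using 0 by (simp add: sum.delta)
  qed
  have L: "tb n Lm L0 L1 (Suc 0) m i l j = qbd_step Lm L0 L1 (int l - int m) i j"
    by (simp only: tb.simps(2) inner) (simp add: sum.delta)
  have R: "(\<Sum>m'\<le>m+1. \<Sum>i'<n. qbd_step Lm L0 L1 (int m' - int m) i i' * tb n Lm L0 L1 0 m' i' l j)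
        = (\<Sum>m'\<le>m+1. if m' = l then qbd_step Lm L0 L1 (int l - int m) i j else 0)"
  proof (intro sum.cong refl)
    fix m' assume "m' \<in> {..m+1}"
    have "(\<Sum>i'<n. qbd_step Lm L0 L1 (int m' - int m) i i' * tb n Lm L0 L1 0 m' i' l j)
       = (\<Sum>i'<n. if i' = j then (if m' = l then qbd_step Lm L0 L1 (int l - int m) i j else 0) else 0)"
      by (intro sum.cong refl) auto
    then show "(\<Sum>i'<n. qbd_step Lm L0 L1 (int m' - int m) i i' * tb n Lm L0 L1 0 m' i' l j) =
         (if m' = l then qbd_step Lm L0 L1 (int l - int m) i j else 0)" using 0 by (simp add: sum.delta)
  qed
  show ?case
  proof (cases "l \<le> m + 1")
    case True
    then show ?thesis using L R by (simp add: sum.delta)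
  next
    case False
    then have "qbd_step Lm L0 L1 (int l - int m) i j = 0" by (intro qbd_step_out) auto
    then show ?thesis using L R False by (simp add: sum.delta)
  qed
next
  case (Suc k)
  let ?S = "qbd_step Lm L0 L1"
  have "tb n Lm L0 L1 (Suc (Suc k)) m i l j =
     (\<Sum>l'\<le>m+Suc k. \<Sum>j'<n. tb n Lm L0 L1 (Suc k) m i l' j' * ?S (int l - int l') j' j)"
    by simp
  also have "\<dots> = (\<Sum>l'\<le>m+Suc k. \<Sum>j'<n. (\<Sum>m'\<le>m+1. \<Sum>i'<n. ?S (int m' - int m) i i' * tb n Lm L0 L1 k m' i' l' j') * ?S (int l - int l') j' j)"
  proof (intro sum.cong refl)
    fix l' j' assume "j' \<in> {..<n}"
    then show "tb n Lm L0 L1 (Suc k) m i l' j' * ?S (int l - int l') j' j =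
      (\<Sum>m'\<le>m+1. \<Sum>i'<n. ?S (int m' - int m) i i' * tb n Lm L0 L1 k m' i' l' j') * ?S (int l - int l') j' j"
      using Suc.prems by (subst Suc.IH) auto
  qed
  also have "\<dots> = (\<Sum>m'\<le>m+1. \<Sum>i'<n. ?S (int m' - int m) i i' * (\<Sum>l'\<le>m+Suc k. \<Sum>j'<n. tb n Lm L0 L1 k m' i' l' j' * ?S (int l - int l') j' j))"
    by (rule sum4_swap)
  also have "\<dots> = (\<Sum>m'\<le>m+1. \<Sum>i'<n. ?S (int m' - int m) i i' * tb n Lm L0 L1 (Suc k) m' i' l j)"
  proof (intro sum.cong refl arg_cong2[where f="(*)"])
    fix m' i' assume m': "m' \<in> {..m+1}"
    have "(\<Sum>l'\<le>m'+k. \<Sum>j'<n. tb n Lm L0 L1 k m' i' l' j' * ?S (int l - int l') j' j)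
      = (\<Sum>l'\<le>m+Suc k. \<Sum>j'<n. tb n Lm L0 L1 k m' i' l' j' * ?S (int l - int l') j' j)"
      using m' by (intro sum.mono_neutral_left) (auto simp: tb_support)
    then show "(\<Sum>l'\<le>m+Suc k. \<Sum>j'<n. tb n Lm L0 L1 k m' i' l' j' * ?S (int l - int l') j' j) = tb n Lm L0 L1 (Suc k) m' i' l j"
      by simp
  qed
  finally show ?case .
qed

lemma sum_three:
  "(\<Sum>m'\<le>m+1. \<Sum>i'<n. qbd_step Lm L0 L1 (int m' - int m) i i' * h m' i')
   = (if m \<ge> 1 then (\<Sum>i'<n. Lm $$ (i,i') * h (m-1) i') else 0)
     + (\<Sum>i'<n. L0 $$ (i,i') * h m i') + (\<Sum>i'<n. L1 $$ (i,i') * h (m+1) i')"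
proof -
  let ?g = "\<lambda>m'. \<Sum>i'<n. qbd_step Lm L0 L1 (int m' - int m) i i' * h m' i'"
  define S where "S = (if m \<ge> 1 then {m-1, m, m+1} else {m, m+1})"
  have "sum ?g {..m+1} = sum ?g S"
  proof (rule sum.mono_neutral_right)
    show "S \<subseteq> {..m+1}" by (auto simp: S_def)
    show "\<forall>m'\<in>{..m+1} - S. ?g m' = 0"
    proof
      fix m' assume "m' \<in> {..m+1} - S"
      then have "int m' - int m \<noteq> -1" "int m' - int m \<noteq> 0" "int m' - int m \<noteq> 1"
        by (auto simp: S_def split: if_splits)
      then show "?g m' = 0" by (simp add: qbd_step_out)
    qed
  qed simp
  also have "\<dots> = (if m \<ge> 1 then (\<Sum>i'<n. Lm $$ (i,i') * h (m-1) i') else 0)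
     + (\<Sum>i'<n. L0 $$ (i,i') * h m i') + (\<Sum>i'<n. L1 $$ (i,i') * h (m+1) i')"
  proof (cases "m \<ge> 1")
    case True
    then have d: "int (m - 1) - int m = -1" by simp
    have n1: "m - 1 \<notin> {m, m+1}" "m \<notin> {m+1}" using True by auto
    have "sum ?g {m-1, m, m+1} = ?g (m-1) + ?g m + ?g (m+1)"
      by (simp only: sum.insert[OF _ n1(1)] sum.insert[OF _ n1(2)] finite.intros sum.empty) simp
    then show ?thesis using True unfolding S_def
      by (simp add: d qbd_step_def)
  next
    case False
    then show ?thesis unfolding S_def by (simp add: qbd_step_def)
  qed
  finally show ?thesis .
qed

definition Dm :: "nat \<Rightarrow> real mat \<Rightarrow> real mat \<Rightarrow> real mat \<Rightarrow> nat \<Rightarrow> nat \<Rightarrow> nat \<Rightarrow> nat \<Rightarrow> real" where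
  "Dm n Lm L0 L1 k m i j = (case k of 0 \<Rightarrow> 0 | Suc k' \<Rightarrow> \<Sum>j'<n. tb n Lm L0 L1 k' m i 0 j' * Lm $$ (j',j))"

lemma Dm_0[simp]: "Dm n Lm L0 L1 0 m i j = 0"
  by (simp add: Dm_def)

lemma Dm_rec:
  assumes "i < n" "j < n"
  shows "Dm n Lm L0 L1 (Suc k) m i j =
    (if k = 0 \<and> m = 0 then Lm $$ (i,j) else 0)
    + (if m \<ge> 1 then (\<Sum>i'<n. Lm $$ (i,i') * Dm n Lm L0 L1 k (m-1) i' j) else 0)
    + (\<Sum>i'<n. L0 $$ (i,i') * Dm n Lm L0 L1 k m i' j)
    + (\<Sum>i'<n. L1 $$ (i,i') * Dm n Lm L0 L1 k (m+1) i' j)"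
proof (cases k)
  case 0
  have "Dm n Lm L0 L1 (Suc 0) m i j = (\<Sum>j'<n. tb n Lm L0 L1 0 m i 0 j' * Lm $$ (j',j))"
    by (simp add: Dm_def)
  also have "\<dots> = (\<Sum>j'<n. if j' = i then (if m = 0 then Lm $$ (i,j) else 0) else 0)"
    by (intro sum.cong refl) auto
  also have "\<dots> = (if m = 0 then Lm $$ (i,j) else 0)" using assms by (simp add: sum.delta)
  finally show ?thesis using 0 by simp
next
  case (Suc k')
  let ?S = "qbd_step Lm L0 L1"
  have "Dm n Lm L0 L1 (Suc k) m i j = (\<Sum>j'<n. tb n Lm L0 L1 (Suc k') m i 0 j' * Lm $$ (j',j))"
    using Suc by (simp add: Dm_def)
  also have "\<dots> = (\<Sum>j'<n. (\<Sum>m'\<le>m+1. \<Sum>i'<n. ?S (int m' - int m) i i' * tb n Lm L0 L1 k' m' i' 0 j') * Lm $$ (j',j))"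
    using assms by (intro sum.cong refl) (subst tb_first, auto)
  also have "\<dots> = (\<Sum>m'\<le>m+1. \<Sum>i'<n. ?S (int m' - int m) i i' * Dm n Lm L0 L1 k m' i' j)"
  proof -
    have "(\<Sum>j'<n. (\<Sum>m'\<le>m+1. \<Sum>i'<n. ?S (int m' - int m) i i' * tb n Lm L0 L1 k' m' i' 0 j') * Lm $$ (j',j))
      = (\<Sum>u\<in>{()}. \<Sum>j'<n. (\<Sum>m'\<le>m+1. \<Sum>i'<n. ?S (int m' - int m) i i' * tb n Lm L0 L1 k' m' i' 0 j') * Lm $$ (j',j))"
      by simp
    also have "\<dots> = (\<Sum>m'\<le>m+1. \<Sum>i'<n. ?S (int m' - int m) i i' * (\<Sum>u\<in>{()}. \<Sum>j'<n. tb n Lm L0 L1 k' m' i' 0 j' * Lm $$ (j',j)))"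
      by (rule sum4_swap)
    finally show ?thesis using Suc by (simp add: Dm_def)
  qed
  also have "\<dots> = (if m \<ge> 1 then (\<Sum>i'<n. Lm $$ (i,i') * Dm n Lm L0 L1 k (m-1) i' j) else 0)
    + (\<Sum>i'<n. L0 $$ (i,i') * Dm n Lm L0 L1 k m i' j)
    + (\<Sum>i'<n. L1 $$ (i,i') * Dm n Lm L0 L1 k (m+1) i' j)" by (rule sum_three)
  finally show ?thesis using Suc by simp
qed

lemma mat_mult_entry:
  assumes "A \<in> carrier_mat n k" "B \<in> carrier_mat k m" "i < n" "j < m"
  shows "(A * B) $$ (i,j) = (\<Sum>r<k. A $$ (i,r) * B $$ (r,j))"
  using assms by (simp add: scalar_prod_def atLeast0LessThan)

declare index_mult_mat(1)[simp del]

lemma pow_mat_Suc_left: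
  assumes "X \<in> carrier_mat n n"
  shows "X ^\<^sub>m (Suc m) = X * X ^\<^sub>m m"
proof (induction m)
  case 0 then show ?case using assms by simp
next
  case (Suc m)
  have "X ^\<^sub>m Suc (Suc m) = (X * X ^\<^sub>m m) * X" using Suc by simp
  also have "\<dots> = X * (X ^\<^sub>m m * X)" using assms by (intro assoc_mult_mat) auto
  finally show ?case by simp
qed

lemma swap_mult:
  fixes a :: "'i \<Rightarrow> real"
  shows "(\<Sum>k\<in>K. \<Sum>i\<in>I. a i * f k i) = (\<Sum>i\<in>I. a i * (\<Sum>k\<in>K. f k i))"
  by (simp add: sum_distrib_left) (rule sum.swap)

definition PS :: "nat \<Rightarrow> real mat \<Rightarrow> real mat \<Rightarrow> real mat \<Rightarrow> nat \<Rightarrow> nat \<Rightarrow> nat \<Rightarrow> nat \<Rightarrow> real" where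
  "PS n Lm L0 L1 N m i j = (\<Sum>k<N. Dm n Lm L0 L1 k m i j)"

lemma PS_rec:
  assumes "i < n" "j < n"
  shows "PS n Lm L0 L1 (Suc N) m i j =
    (if N > 0 \<and> m = 0 then Lm $$ (i,j) else 0)
    + (if m \<ge> 1 then (\<Sum>i'<n. Lm $$ (i,i') * PS n Lm L0 L1 N (m-1) i' j) else 0)
    + (\<Sum>i'<n. L0 $$ (i,i') * PS n Lm L0 L1 N m i' j)
    + (\<Sum>i'<n. L1 $$ (i,i') * PS n Lm L0 L1 N (m+1) i' j)"
proof -
  have "PS n Lm L0 L1 (Suc N) m i j = (\<Sum>k<N. Dm n Lm L0 L1 (Suc k) m i j)"
    unfolding PS_def by (subst sum.lessThan_Suc_shift) simp
  also have "\<dots> = (\<Sum>k<N. (if k = 0 \<and> m = 0 then Lm $$ (i,j) else 0))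
    + (\<Sum>k<N. (if m \<ge> 1 then (\<Sum>i'<n. Lm $$ (i,i') * Dm n Lm L0 L1 k (m-1) i' j) else 0))
    + (\<Sum>k<N. (\<Sum>i'<n. L0 $$ (i,i') * Dm n Lm L0 L1 k m i' j))
    + (\<Sum>k<N. (\<Sum>i'<n. L1 $$ (i,i') * Dm n Lm L0 L1 k (m+1) i' j))"
    using assms by (simp add: Dm_rec sum.distrib)
  also have "(\<Sum>k<N. (if k = 0 \<and> m = 0 then Lm $$ (i,j) else 0)) = (if N > 0 \<and> m = 0 then Lm $$ (i,j) else 0)"
    by (cases "m = 0") (auto simp: sum.delta')
  also have "(\<Sum>k<N. (if m \<ge> 1 then (\<Sum>i'<n. Lm $$ (i,i') * Dm n Lm L0 L1 k (m-1) i' j) else 0))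
    = (if m \<ge> 1 then (\<Sum>i'<n. Lm $$ (i,i') * PS n Lm L0 L1 N (m-1) i' j) else 0)"
    unfolding PS_def by (cases "m \<ge> 1") (simp_all add: swap_mult)
  also have "(\<Sum>k<N. (\<Sum>i'<n. L0 $$ (i,i') * Dm n Lm L0 L1 k m i' j))
    = (\<Sum>i'<n. L0 $$ (i,i') * PS n Lm L0 L1 N m i' j)"
    unfolding PS_def by (rule swap_mult)
  also have "(\<Sum>k<N. (\<Sum>i'<n. L1 $$ (i,i') * Dm n Lm L0 L1 k (m+1) i' j))
    = (\<Sum>i'<n. L1 $$ (i,i') * PS n Lm L0 L1 N (m+1) i' j)"
    unfolding PS_def by (rule swap_mult)
  finally show ?thesis .
qed

definition nonnegL :: "nat \<Rightarrow> real mat \<Rightarrow> bool" where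
  "nonnegL n A \<longleftrightarrow> A \<in> carrier_mat n n \<and> (\<forall>i<n. \<forall>j<n. A $$ (i,j) \<ge> 0)"

lemma Dm_nonneg:
  assumes "nonnegL n Lm" "nonnegL n L0" "nonnegL n L1" "i < n" "j < n"
  shows "Dm n Lm L0 L1 k m i j \<ge> 0"
  using assms(4,5)
proof (induction k arbitrary: m i j)
  case 0 then show ?case by simp
next
  case (Suc k)
  have a: "\<And>i'. i' < n \<Longrightarrow> Lm $$ (i,i') \<ge> 0 \<and> L0 $$ (i,i') \<ge> 0 \<and> L1 $$ (i,i') \<ge> 0"
    using assms(1-3) Suc.prems unfolding nonnegL_def by auto
  have "\<And>i'. i' < n \<Longrightarrow> Lm $$ (i,i') * Dm n Lm L0 L1 k (m-1) i' j \<ge> 0"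
       "\<And>i'. i' < n \<Longrightarrow> L0 $$ (i,i') * Dm n Lm L0 L1 k m i' j \<ge> 0"
       "\<And>i'. i' < n \<Longrightarrow> L1 $$ (i,i') * Dm n Lm L0 L1 k (m+1) i' j \<ge> 0"
    using a Suc.IH Suc.prems by (simp_all add: mult_nonneg_nonneg)
  note h = this
  have "(\<Sum>i'<n. Lm $$ (i,i') * Dm n Lm L0 L1 k (m-1) i' j) \<ge> 0"
    using h(1) by (intro sum_nonneg) auto
  moreover have "(\<Sum>i'<n. L0 $$ (i,i') * Dm n Lm L0 L1 k m i' j) \<ge> 0"
    using h(2) by (intro sum_nonneg) auto
  moreover have "(\<Sum>i'<n. L1 $$ (i,i') * Dm n Lm L0 L1 k (m+1) i' j) \<ge> 0"
    using h(3) by (intro sum_nonneg) auto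
  moreover have "Lm $$ (i,j) \<ge> 0" using assms(1) Suc.prems unfolding nonnegL_def by auto
  ultimately show ?case unfolding Dm_rec[OF Suc.prems, where k=k and m=m]
    by (intro add_nonneg_nonneg) auto
qed

lemma PS_nonneg:
  assumes "nonnegL n Lm" "nonnegL n L0" "nonnegL n L1" "i < n" "j < n"
  shows "PS n Lm L0 L1 N m i j \<ge> 0"
  unfolding PS_def using Dm_nonneg[OF assms] by (simp add: sum_nonneg)

lemma PS_rowsum:
  assumes "nonnegL n Lm" "nonnegL n L0" "nonnegL n L1"
    and rs: "\<forall>i<n. (\<Sum>j<n. Lm $$ (i,j) + L0 $$ (i,j) + L1 $$ (i,j)) \<le> 1"
    and "i < n"
  shows "(\<Sum>j<n. PS n Lm L0 L1 N m i j) \<le> 1"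
  using assms(5)
proof (induction N arbitrary: m i)
  case 0 then show ?case by (simp add: PS_def)
next
  case (Suc N)
  have nn: "\<And>i'. i' < n \<Longrightarrow> Lm $$ (i,i') \<ge> 0 \<and> L0 $$ (i,i') \<ge> 0 \<and> L1 $$ (i,i') \<ge> 0"
    using assms(1-3) Suc.prems unfolding nonnegL_def by auto
  have b: "(\<Sum>i'<n. A $$ (i,i') * (\<Sum>j<n. PS n Lm L0 L1 N m' i' j)) \<le> (\<Sum>i'<n. A $$ (i,i'))"
    if "\<And>i'. i' < n \<Longrightarrow> A $$ (i,i') \<ge> 0" for A m'
    by (intro sum_mono mult_right_le_one_le) (auto simp: that Suc.IH intro!: sum_nonneg PS_nonneg assms(1-3))
  have "(\<Sum>j<n. PS n Lm L0 L1 (Suc N) m i j) =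
    (\<Sum>j<n. (if N > 0 \<and> m = 0 then Lm $$ (i,j) else 0))
    + (if m \<ge> 1 then (\<Sum>i'<n. Lm $$ (i,i') * (\<Sum>j<n. PS n Lm L0 L1 N (m-1) i' j)) else 0)
    + (\<Sum>i'<n. L0 $$ (i,i') * (\<Sum>j<n. PS n Lm L0 L1 N m i' j))
    + (\<Sum>i'<n. L1 $$ (i,i') * (\<Sum>j<n. PS n Lm L0 L1 N (m+1) i' j))"
    using Suc.prems by (simp add: PS_rec sum.distrib swap_mult)
  also have "\<dots> \<le> (\<Sum>j<n. Lm $$ (i,j)) + (\<Sum>j<n. L0 $$ (i,j)) + (\<Sum>j<n. L1 $$ (i,j))"
  proof -
    have "(\<Sum>j<n. (if N > 0 \<and> m = 0 then Lm $$ (i,j) else 0))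
      + (if m \<ge> 1 then (\<Sum>i'<n. Lm $$ (i,i') * (\<Sum>j<n. PS n Lm L0 L1 N (m-1) i' j)) else 0)
      \<le> (\<Sum>j<n. Lm $$ (i,j))"
    proof (cases "m = 0")
      case True
      have "(\<Sum>j<n. (if N > 0 \<and> m = 0 then Lm $$ (i,j) else 0)) \<le> (\<Sum>j<n. Lm $$ (i,j))"
        using nn by (intro sum_mono) auto
      then show ?thesis using True by simp
    next
      case False
      then show ?thesis using b[of Lm "m-1"] nn by simp
    qed
    moreover have "(\<Sum>i'<n. L0 $$ (i,i') * (\<Sum>j<n. PS n Lm L0 L1 N m i' j)) \<le> (\<Sum>j<n. L0 $$ (i,j))"
      using b[of L0 m] nn by auto
    moreover have "(\<Sum>i'<n. L1 $$ (i,i') * (\<Sum>j<n. PS n Lm L0 L1 N (m+1) i' j)) \<le> (\<Sum>j<n. L1 $$ (i,j))"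
      using b[of L1 "m+1"] nn by auto
    ultimately show ?thesis by linarith
  qed
  also have "\<dots> \<le> 1" using rs Suc.prems by (simp add: sum.distrib)
  finally show ?case .
qed

lemma pow_nonneg:
  assumes "nonnegL n X"
  shows "nonnegL n (X ^\<^sub>m m)"
proof (induction m)
  case 0 then show ?case using assms unfolding nonnegL_def by auto
next
  case (Suc m)
  have c: "X ^\<^sub>m m \<in> carrier_mat n n" "X \<in> carrier_mat n n" using assms unfolding nonnegL_def by auto
  show ?case unfolding nonnegL_def
  proof (intro conjI allI impI)
    show "X ^\<^sub>m Suc m \<in> carrier_mat n n" using c by (metis pow_carrier_mat)
    fix i j assume ij: "i < n" "j < n"
    have "(X ^\<^sub>m Suc m) $$ (i,j) = (\<Sum>r<n. (X ^\<^sub>m m) $$ (i,r) * X $$ (r,j))"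
      by (simp only: pow_mat.simps(2) mat_mult_entry[OF c ij])
    also have "\<dots> \<ge> 0" using Suc assms ij unfolding nonnegL_def by (intro sum_nonneg mult_nonneg_nonneg) auto
    finally show "(X ^\<^sub>m Suc m) $$ (i,j) \<ge> 0" .
  qed
qed

lemma mult_mono_left_entry:
  assumes "A \<in> carrier_mat n n" "B \<in> carrier_mat n n" "nonnegL n C"
    and le: "\<forall>i<n. \<forall>j<n. A $$ (i,j) \<le> B $$ (i,j)" and "i < n" "j < n"
  shows "(A * C) $$ (i,j) \<le> (B * C) $$ (i,j)"
proof -
  have C: "C \<in> carrier_mat n n" using assms(3) unfolding nonnegL_def by auto
  have "(\<Sum>r<n. A $$ (i,r) * C $$ (r,j)) \<le> (\<Sum>r<n. B $$ (i,r) * C $$ (r,j))"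
    using assms unfolding nonnegL_def by (intro sum_mono mult_right_mono) auto
  then show ?thesis by (simp only: mat_mult_entry[OF assms(1) C assms(5,6)] mat_mult_entry[OF assms(2) C assms(5,6)])
qed

lemma PS_upper:
  assumes L: "nonnegL n Lm" "nonnegL n L0" "nonnegL n L1" and X: "nonnegL n X"
    and sup: "\<forall>i<n. \<forall>j<n. (Lm + L0 * X + L1 * (X * X)) $$ (i,j) \<le> X $$ (i,j)"
    and "i < n" "j < n"
  shows "PS n Lm L0 L1 N m i j \<le> (X ^\<^sub>m (m+1)) $$ (i,j)"
  using assms(6,7)
proof (induction N arbitrary: m i j)
  case 0
  then show ?case using pow_nonneg[OF X, of "m+1"] unfolding nonnegL_def PS_def by simp
next
  case (Suc N)
  have c: "Lm \<in> carrier_mat n n" "L0 \<in> carrier_mat n n" "L1 \<in> carrier_mat n n" "X \<in> carrier_mat n n"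
    using L X unfolding nonnegL_def by auto
  have nn: "\<And>i'. i' < n \<Longrightarrow> Lm $$ (i,i') \<ge> 0 \<and> L0 $$ (i,i') \<ge> 0 \<and> L1 $$ (i,i') \<ge> 0"
    using L Suc.prems unfolding nonnegL_def by auto
  let ?Y = "\<lambda>m. X ^\<^sub>m (m+1)"
  have ij: "i < n" "j < n" using Suc.prems by auto
  have b: "(\<Sum>i'<n. A $$ (i,i') * PS n Lm L0 L1 N m' i' j) \<le> (\<Sum>i'<n. A $$ (i,i') * ?Y m' $$ (i',j))"
    if "\<And>i'. i' < n \<Longrightarrow> A $$ (i,i') \<ge> 0" for A m'
  proof (rule sum_mono)
    fix i' assume "i' \<in> {..<n}"
    then have "PS n Lm L0 L1 N m' i' j \<le> ?Y m' $$ (i',j)" using Suc.IH Suc.prems by blast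
    then show "A $$ (i,i') * PS n Lm L0 L1 N m' i' j \<le> A $$ (i,i') * ?Y m' $$ (i',j)"
      using that \<open>i' \<in> {..<n}\<close> by (intro mult_left_mono) auto
  qed
  have "PS n Lm L0 L1 (Suc N) m i j \<le>
    (if m = 0 then Lm $$ (i,j) else 0)
    + (if m \<ge> 1 then (\<Sum>i'<n. Lm $$ (i,i') * ?Y (m-1) $$ (i',j)) else 0)
    + (\<Sum>i'<n. L0 $$ (i,i') * ?Y m $$ (i',j))
    + (\<Sum>i'<n. L1 $$ (i,i') * ?Y (m+1) $$ (i',j))"
  proof -
    have "(if N > 0 \<and> m = 0 then Lm $$ (i,j) else 0)
      + (if m \<ge> 1 then (\<Sum>i'<n. Lm $$ (i,i') * PS n Lm L0 L1 N (m-1) i' j) else 0)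
      \<le> (if m = 0 then Lm $$ (i,j) else 0)
      + (if m \<ge> 1 then (\<Sum>i'<n. Lm $$ (i,i') * ?Y (m-1) $$ (i',j)) else 0)"
    proof (cases m)
      case 0 then show ?thesis using nn Suc.prems by auto
    next
      case (Suc m')
      then show ?thesis using b[of Lm "m'"] nn by auto
    qed
    moreover have "(\<Sum>i'<n. L0 $$ (i,i') * PS n Lm L0 L1 N m i' j) \<le> (\<Sum>i'<n. L0 $$ (i,i') * ?Y m $$ (i',j))"
      using b[of L0 m] nn by auto
    moreover have "(\<Sum>i'<n. L1 $$ (i,i') * PS n Lm L0 L1 N (m+1) i' j) \<le> (\<Sum>i'<n. L1 $$ (i,i') * ?Y (m+1) $$ (i',j))"
      using b[of L1 "m+1"] nn by auto
    ultimately show ?thesis unfolding PS_rec[OF Suc.prems] by linarith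
  qed
  also have "\<dots> = ((Lm + L0 * X + L1 * (X * X)) * X ^\<^sub>m m) $$ (i,j)"
  proof -
    have e1: "(Lm + L0 * X + L1 * (X * X)) * X ^\<^sub>m m = Lm * X ^\<^sub>m m + L0 * ?Y m + L1 * ?Y (m+1)"
    proof -
      have "(Lm + L0 * X + L1 * (X * X)) * X ^\<^sub>m m = (Lm + L0 * X) * X ^\<^sub>m m + (L1 * (X * X)) * X ^\<^sub>m m"
        using c by (intro add_mult_distrib_mat) auto
      also have "(Lm + L0 * X) * X ^\<^sub>m m = Lm * X ^\<^sub>m m + (L0 * X) * X ^\<^sub>m m"
        using c by (intro add_mult_distrib_mat) auto
      also have "(L0 * X) * X ^\<^sub>m m = L0 * (X * X ^\<^sub>m m)"
        using c by (intro assoc_mult_mat) auto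
      also have "X * X ^\<^sub>m m = ?Y m" using pow_mat_Suc_left[OF c(4)] by simp
      also have "(L1 * (X * X)) * X ^\<^sub>m m = L1 * ((X * X) * X ^\<^sub>m m)"
        using c by (intro assoc_mult_mat) auto
      also have "(X * X) * X ^\<^sub>m m = X * (X * X ^\<^sub>m m)"
        using c by (intro assoc_mult_mat) auto
      also have "X * (X * X ^\<^sub>m m) = ?Y (m+1)" by (metis pow_mat_Suc_left[OF c(4)] Suc_eq_plus1)
      finally show ?thesis .
    qed
    have e2: "(Lm * X ^\<^sub>m m) $$ (i,j) = (if m = 0 then Lm $$ (i,j) else 0)
        + (if m \<ge> 1 then (\<Sum>i'<n. Lm $$ (i,i') * ?Y (m-1) $$ (i',j)) else 0)"
    proof (cases m)
      case 0 then show ?thesis using c Suc.prems by simp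
    next
      case (Suc m')
      have "(Lm * X ^\<^sub>m m) $$ (i,j) = (\<Sum>i'<n. Lm $$ (i,i') * (X ^\<^sub>m m) $$ (i',j))"
        by (rule mat_mult_entry[OF c(1) pow_carrier_mat[OF c(4)] ij])
      then show ?thesis using Suc by simp
    qed
    have sumE: "(Lm * X ^\<^sub>m m + L0 * ?Y m + L1 * ?Y (m+1)) $$ (i,j)
       = (Lm * X ^\<^sub>m m) $$ (i,j) + (L0 * ?Y m) $$ (i,j) + (L1 * ?Y (m+1)) $$ (i,j)"
      using c ij by simp
    have eB: "(L0 * ?Y m) $$ (i,j) = (\<Sum>i'<n. L0 $$ (i,i') * ?Y m $$ (i',j))"
      by (rule mat_mult_entry[OF c(2) pow_carrier_mat[OF c(4)] ij])
    have eC: "(L1 * ?Y (m+1)) $$ (i,j) = (\<Sum>i'<n. L1 $$ (i,i') * ?Y (m+1) $$ (i',j))"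
      by (rule mat_mult_entry[OF c(3) pow_carrier_mat[OF c(4)] ij])
    show ?thesis by (simp only: e1 sumE e2 eB eC)
  qed
  also have "\<dots> \<le> (X * X ^\<^sub>m m) $$ (i,j)"
    using c Suc.prems sup pow_nonneg[OF X] by (intro mult_mono_left_entry[where n=n]) auto
  also have "\<dots> = ?Y m $$ (i,j)" using pow_mat_Suc_left[OF c(4)] by simp
  finally show ?case .
qed

lemma tri_reindex:
  fixes g :: "nat \<Rightarrow> nat \<Rightarrow> nat \<Rightarrow> real"
  shows "(\<Sum>a\<le>K. \<Sum>c\<le>a. g c (a - c) (K - a)) = (\<Sum>c\<le>K. \<Sum>b\<le>K - c. g c b (K - c - b))"
proof -
  let ?G = "\<lambda>c b. g c b (K - c - b)"
  have "(\<Sum>a\<le>K. \<Sum>c\<le>a. g c (a - c) (K - a)) = (\<Sum>a\<le>K. \<Sum>c\<le>a. ?G c (a - c))"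
    by (intro sum.cong refl) (auto simp: diff_diff_left)
  also have "\<dots> = (\<Sum>(c,b)\<in>{(c,b). c + b \<le> K}. ?G c b)"
    by (rule sum.triangle_reindex_eq[symmetric])
  also have "{(c,b). c + b \<le> K} = Sigma {..K} (\<lambda>c. {..K - c})" by auto
  also have "(\<Sum>(c,b)\<in>Sigma {..K} (\<lambda>c. {..K - c}). ?G c b) = (\<Sum>c\<le>K. \<Sum>b\<le>K - c. ?G c b)"
    by (rule sum.Sigma[symmetric]) auto
  finally show ?thesis .
qed

lemma conv_identity:
  fixes x :: "nat \<Rightarrow> nat \<Rightarrow> real" and y :: "nat \<Rightarrow> nat \<Rightarrow> nat \<Rightarrow> real" and z :: "nat \<Rightarrow> nat \<Rightarrow> real"
  shows "(\<Sum>a\<le>K. \<Sum>r<n. (\<Sum>c\<le>a. \<Sum>s<n. x c s * y (a - c) s r) * z (K - a) r)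
       = (\<Sum>c\<le>K. \<Sum>s<n. x c s * (\<Sum>b\<le>K - c. \<Sum>r<n. y b s r * z (K - c - b) r))"
proof -
  define g where "g c b e = (\<Sum>s<n. \<Sum>r<n. x c s * y b s r * z e r)" for c b e
  have "(\<Sum>a\<le>K. \<Sum>r<n. (\<Sum>c\<le>a. \<Sum>s<n. x c s * y (a - c) s r) * z (K - a) r)
      = (\<Sum>a\<le>K. \<Sum>c\<le>a. g c (a - c) (K - a))"
  proof (rule sum.cong[OF refl])
    fix a
    have "(\<Sum>r<n. (\<Sum>c\<le>a. \<Sum>s<n. x c s * y (a - c) s r) * z (K - a) r)
        = (\<Sum>r<n. \<Sum>c\<le>a. \<Sum>s<n. x c s * y (a - c) s r * z (K - a) r)"
      by (simp add: sum_distrib_right)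
    also have "\<dots> = (\<Sum>c\<le>a. \<Sum>r<n. \<Sum>s<n. x c s * y (a - c) s r * z (K - a) r)"
      by (rule sum.swap)
    also have "\<dots> = (\<Sum>c\<le>a. g c (a - c) (K - a))"
      unfolding g_def by (rule sum.cong[OF refl], rule sum.swap)
    finally show "(\<Sum>r<n. (\<Sum>c\<le>a. \<Sum>s<n. x c s * y (a - c) s r) * z (K - a) r) = (\<Sum>c\<le>a. g c (a - c) (K - a))" .
  qed
  also have "\<dots> = (\<Sum>c\<le>K. \<Sum>b\<le>K - c. g c b (K - c - b))"
    by (rule tri_reindex)
  also have "\<dots> = (\<Sum>c\<le>K. \<Sum>s<n. x c s * (\<Sum>b\<le>K - c. \<Sum>r<n. y b s r * z (K - c - b) r))"
  proof (rule sum.cong[OF refl])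
    fix c
    have "(\<Sum>b\<le>K - c. g c b (K - c - b)) = (\<Sum>b\<le>K - c. \<Sum>s<n. x c s * (\<Sum>r<n. y b s r * z (K - c - b) r))"
      unfolding g_def by (simp add: sum_distrib_left mult.assoc)
    also have "\<dots> = (\<Sum>s<n. x c s * (\<Sum>b\<le>K - c. \<Sum>r<n. y b s r * z (K - c - b) r))"
      by (rule swap_mult)
    finally show "(\<Sum>b\<le>K - c. g c b (K - c - b)) = (\<Sum>s<n. x c s * (\<Sum>b\<le>K - c. \<Sum>r<n. y b s r * z (K - c - b) r))" .
  qed
  finally show ?thesis .
qed

lemma Dm_conv:
  assumes "i < n" "j < n"
  shows "Dm n Lm L0 L1 k (Suc m) i j = (\<Sum>a\<le>k. \<Sum>r<n. Dm n Lm L0 L1 a 0 i r * Dm n Lm L0 L1 (k - a) m r j)"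
  using assms
proof (induction k arbitrary: m i j rule: less_induct)
  case (less k)
  let ?D = "Dm n Lm L0 L1"
  show ?case
  proof (cases k)
    case 0 then show ?thesis by simp
  next
    case (Suc k')
    have ij: "i < n" "j < n" using less.prems by auto
    have IH: "\<And>a m i j. a \<le> k' \<Longrightarrow> i < n \<Longrightarrow> j < n \<Longrightarrow>
        ?D a (Suc m) i j = (\<Sum>b\<le>a. \<Sum>r<n. ?D b 0 i r * ?D (a - b) m r j)"
      using less.IH Suc by auto
    have L: "?D k (Suc m) i j = (\<Sum>i'<n. Lm $$ (i,i') * ?D k' m i' j)
       + (\<Sum>i'<n. L0 $$ (i,i') * ?D k' (Suc m) i' j) + (\<Sum>i'<n. L1 $$ (i,i') * ?D k' (Suc (Suc m)) i' j)"
      using Suc Dm_rec[OF ij, where k=k' and m="Suc m"] by simp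
    have "(\<Sum>a\<le>k. \<Sum>r<n. ?D a 0 i r * ?D (k - a) m r j)
        = (\<Sum>a\<le>k'. \<Sum>r<n. ?D (Suc a) 0 i r * ?D (k' - a) m r j)"
      unfolding Suc by (subst sum.atMost_Suc_shift) simp
    also have "\<dots> = (\<Sum>a\<le>k'. \<Sum>r<n. ((if a = 0 then Lm $$ (i,r) else 0)
         + (\<Sum>i'<n. L0 $$ (i,i') * ?D a 0 i' r) + (\<Sum>i'<n. L1 $$ (i,i') * ?D a (Suc 0) i' r)) * ?D (k' - a) m r j)"
      using ij by (intro sum.cong refl) (simp add: Dm_rec)
    also have "\<dots> = (\<Sum>a\<le>k'. \<Sum>r<n. (if a = 0 then Lm $$ (i,r) else 0) * ?D (k' - a) m r j)
        + (\<Sum>a\<le>k'. \<Sum>r<n. (\<Sum>i'<n. L0 $$ (i,i') * ?D a 0 i' r) * ?D (k' - a) m r j)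
        + (\<Sum>a\<le>k'. \<Sum>r<n. (\<Sum>i'<n. L1 $$ (i,i') * ?D a (Suc 0) i' r) * ?D (k' - a) m r j)"
      by (simp add: distrib_right sum.distrib)
    also have "(\<Sum>a\<le>k'. \<Sum>r<n. (if a = 0 then Lm $$ (i,r) else 0) * ?D (k' - a) m r j)
        = (\<Sum>i'<n. Lm $$ (i,i') * ?D k' m i' j)"
    proof -
      have "(\<Sum>a\<le>k'. \<Sum>r<n. (if a = 0 then Lm $$ (i,r) else 0) * ?D (k' - a) m r j)
         = (\<Sum>a\<le>k'. if a = 0 then (\<Sum>r<n. Lm $$ (i,r) * ?D (k' - a) m r j) else 0)"
        by (intro sum.cong refl) auto
      then show ?thesis by (simp add: sum.delta)
    qed
    also have "(\<Sum>a\<le>k'. \<Sum>r<n. (\<Sum>i'<n. L0 $$ (i,i') * ?D a 0 i' r) * ?D (k' - a) m r j)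
        = (\<Sum>i'<n. L0 $$ (i,i') * ?D k' (Suc m) i' j)"
    proof -
      have "(\<Sum>a\<le>k'. \<Sum>r<n. (\<Sum>i'<n. L0 $$ (i,i') * ?D a 0 i' r) * ?D (k' - a) m r j)
          = (\<Sum>a\<le>k'. \<Sum>r<n. \<Sum>i'<n. L0 $$ (i,i') * (?D a 0 i' r * ?D (k' - a) m r j))"
        by (simp add: sum_distrib_right mult.assoc)
      also have "\<dots> = (\<Sum>a\<le>k'. \<Sum>i'<n. L0 $$ (i,i') * (\<Sum>r<n. ?D a 0 i' r * ?D (k' - a) m r j))"
        by (rule sum.cong[OF refl], rule swap_mult)
      also have "\<dots> = (\<Sum>i'<n. L0 $$ (i,i') * (\<Sum>a\<le>k'. \<Sum>r<n. ?D a 0 i' r * ?D (k' - a) m r j))"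
        by (rule swap_mult)
      also have "\<dots> = (\<Sum>i'<n. L0 $$ (i,i') * ?D k' (Suc m) i' j)"
        using IH ij by (intro sum.cong refl) auto
      finally show ?thesis .
    qed
    also have "(\<Sum>a\<le>k'. \<Sum>r<n. (\<Sum>i'<n. L1 $$ (i,i') * ?D a (Suc 0) i' r) * ?D (k' - a) m r j)
        = (\<Sum>i'<n. L1 $$ (i,i') * ?D k' (Suc (Suc m)) i' j)"
    proof -
      have "(\<Sum>a\<le>k'. \<Sum>r<n. (\<Sum>i'<n. L1 $$ (i,i') * ?D a (Suc 0) i' r) * ?D (k' - a) m r j)
          = (\<Sum>a\<le>k'. \<Sum>r<n. \<Sum>i'<n. L1 $$ (i,i') * (?D a (Suc 0) i' r * ?D (k' - a) m r j))"
        by (simp add: sum_distrib_right mult.assoc)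
      also have "\<dots> = (\<Sum>a\<le>k'. \<Sum>i'<n. L1 $$ (i,i') * (\<Sum>r<n. ?D a (Suc 0) i' r * ?D (k' - a) m r j))"
        by (rule sum.cong[OF refl], rule swap_mult)
      also have "\<dots> = (\<Sum>i'<n. L1 $$ (i,i') * (\<Sum>a\<le>k'. \<Sum>r<n. ?D a (Suc 0) i' r * ?D (k' - a) m r j))"
        by (rule swap_mult)
      also have "\<dots> = (\<Sum>i'<n. L1 $$ (i,i') * ?D k' (Suc (Suc m)) i' j)"
      proof (rule sum.cong[OF refl])
        fix i' assume i': "i' \<in> {..<n}"
        have "(\<Sum>a\<le>k'. \<Sum>r<n. ?D a (Suc 0) i' r * ?D (k' - a) m r j)
           = (\<Sum>a\<le>k'. \<Sum>r<n. (\<Sum>c\<le>a. \<Sum>s<n. ?D c 0 i' s * ?D (a - c) 0 s r) * ?D (k' - a) m r j)"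
          using IH i' by (intro sum.cong refl) auto
        also have "\<dots> = (\<Sum>c\<le>k'. \<Sum>s<n. ?D c 0 i' s * (\<Sum>b\<le>k' - c. \<Sum>r<n. ?D b 0 s r * ?D (k' - c - b) m r j))"
          by (rule conv_identity)
        also have "\<dots> = (\<Sum>c\<le>k'. \<Sum>s<n. ?D c 0 i' s * ?D (k' - c) (Suc m) s j)"
          using IH ij by (intro sum.cong refl) auto
        also have "\<dots> = ?D k' (Suc (Suc m)) i' j"
          using IH ij i' by auto
        finally show "L1 $$ (i,i') * (\<Sum>a\<le>k'. \<Sum>r<n. ?D a (Suc 0) i' r * ?D (k' - a) m r j) = L1 $$ (i,i') * ?D k' (Suc (Suc m)) i' j"
          by simp
      qed
      finally show ?thesis .
    qed
    finally show ?thesis using L by simp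
  qed
qed

lemma qbd_G_entry:
  assumes "i < n" "j < n" "summable (\<lambda>k. Dm n Lm L0 L1 k 0 i j)"
  shows "qbd_G n Lm L0 L1 $$ (i,j) = (\<Sum>k. Dm n Lm L0 L1 k 0 i j)"
proof -
  have "qbd_G n Lm L0 L1 $$ (i,j) = (\<Sum>k. \<Sum>j'<n. qbd_taboo Lm L0 L1 n k i 0 j' * Lm $$ (j', j))"
    using assms unfolding qbd_G_def by simp
  also have "\<dots> = (\<Sum>k. Dm n Lm L0 L1 (Suc k) 0 i j)"
    by (simp add: Dm_def taboo_tb)
  also have "\<dots> = (\<Sum>k. Dm n Lm L0 L1 k 0 i j)"
    using suminf_split_head[OF assms(3)] by simp
  finally show ?thesis .
qed

lemma Dm1_sums:
  assumes L: "nonnegL n Lm" "nonnegL n L0" "nonnegL n L1"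
    and summ: "\<And>i j. i < n \<Longrightarrow> j < n \<Longrightarrow> summable (\<lambda>k. Dm n Lm L0 L1 k 0 i j)"
    and "r < n" "j < n"
  shows "(\<lambda>k. Dm n Lm L0 L1 k (Suc 0) r j) sums
     (\<Sum>s<n. (\<Sum>k. Dm n Lm L0 L1 k 0 r s) * (\<Sum>k. Dm n Lm L0 L1 k 0 s j))"
proof -
  let ?D = "Dm n Lm L0 L1"
  have e: "?D k (Suc 0) r j = (\<Sum>s<n. \<Sum>a\<le>k. ?D a 0 r s * ?D (k - a) 0 s j)" for k
    using Dm_conv[OF assms(5,6), where k=k and m=0] by (simp add: sum.swap[of _ "{..k}"])
  have "(\<lambda>k. \<Sum>s<n. \<Sum>a\<le>k. ?D a 0 r s * ?D (k - a) 0 s j) sums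
     (\<Sum>s<n. (\<Sum>k. ?D k 0 r s) * (\<Sum>k. ?D k 0 s j))"
  proof (rule sums_sum)
    fix s assume s: "s \<in> {..<n}"
    have n1: "norm (?D k 0 r s) = ?D k 0 r s" for k using Dm_nonneg[OF L] assms s by simp
    have n2: "norm (?D k 0 s j) = ?D k 0 s j" for k using Dm_nonneg[OF L] assms s by simp
    show "(\<lambda>k. \<Sum>a\<le>k. ?D a 0 r s * ?D (k - a) 0 s j) sums ((\<Sum>k. ?D k 0 r s) * (\<Sum>k. ?D k 0 s j))"
    proof (rule Cauchy_product_sums)
      show "summable (\<lambda>k. norm (?D k 0 r s))" unfolding n1 using summ assms s by simp
      show "summable (\<lambda>k. norm (?D k 0 s j))" unfolding n2 using summ assms s by simp
    qed
  qed
  then show ?thesis by (simp add: e)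
qed

lemma G_equation:
  assumes L: "nonnegL n Lm" "nonnegL n L0" "nonnegL n L1"
    and summ: "\<And>i j. i < n \<Longrightarrow> j < n \<Longrightarrow> summable (\<lambda>k. Dm n Lm L0 L1 k 0 i j)"
    and ij: "i < n" "j < n"
  shows "(\<Sum>k. Dm n Lm L0 L1 k 0 i j) = Lm $$ (i,j)
     + (\<Sum>r<n. L0 $$ (i,r) * (\<Sum>k. Dm n Lm L0 L1 k 0 r j))
     + (\<Sum>r<n. L1 $$ (i,r) * (\<Sum>s<n. (\<Sum>k. Dm n Lm L0 L1 k 0 r s) * (\<Sum>k. Dm n Lm L0 L1 k 0 s j)))"
proof -
  let ?D = "Dm n Lm L0 L1"
  let ?G = "\<lambda>r j. (\<Sum>k. ?D k 0 r j)"
  have e: "?D (Suc k) 0 i j = (if k = 0 then Lm $$ (i,j) else 0)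
     + (\<Sum>r<n. L0 $$ (i,r) * ?D k 0 r j) + (\<Sum>r<n. L1 $$ (i,r) * ?D k (Suc 0) r j)" for k
    using Dm_rec[OF ij, where k=k and m=0] by simp
  have s1: "(\<lambda>k. if k = 0 then Lm $$ (i,j) else 0) sums Lm $$ (i,j)"
    using sums_single[of 0 "\<lambda>_. Lm $$ (i,j)"] by simp
  have s2: "(\<lambda>k. \<Sum>r<n. L0 $$ (i,r) * ?D k 0 r j) sums (\<Sum>r<n. L0 $$ (i,r) * ?G r j)"
    using summ ij by (intro sums_sum sums_mult summable_sums) auto
  have s3: "(\<lambda>k. \<Sum>r<n. L1 $$ (i,r) * ?D k (Suc 0) r j) sums (\<Sum>r<n. L1 $$ (i,r) * (\<Sum>s<n. ?G r s * ?G s j))"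
    using Dm1_sums[OF L summ] ij by (intro sums_sum sums_mult) auto
  have "(\<lambda>k. ?D (Suc k) 0 i j) sums (Lm $$ (i,j) + (\<Sum>r<n. L0 $$ (i,r) * ?G r j)
      + (\<Sum>r<n. L1 $$ (i,r) * (\<Sum>s<n. ?G r s * ?G s j)))"
    unfolding e by (intro sums_add s1 s2 s3)
  then have "(\<lambda>k. ?D k 0 i j) sums (Lm $$ (i,j) + (\<Sum>r<n. L0 $$ (i,r) * ?G r j)
      + (\<Sum>r<n. L1 $$ (i,r) * (\<Sum>s<n. ?G r s * ?G s j)))"
    by (subst (asm) sums_Suc_iff) simp
  then show ?thesis by (rule sums_unique[symmetric])
qed

lemma qbd_G_carrier: "qbd_G n Lm L0 L1 \<in> carrier_mat n n"
  unfolding qbd_G_def by simp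

lemma qbd_G_equation:
  assumes L: "nonnegL n Lm" "nonnegL n L0" "nonnegL n L1"
    and summ: "\<And>i j. i < n \<Longrightarrow> j < n \<Longrightarrow> summable (\<lambda>k. Dm n Lm L0 L1 k 0 i j)"
  shows "qbd_G n Lm L0 L1 = Lm + L0 * qbd_G n Lm L0 L1 + L1 * (qbd_G n Lm L0 L1 * qbd_G n Lm L0 L1)"
proof -
  let ?G = "qbd_G n Lm L0 L1"
  have c: "Lm \<in> carrier_mat n n" "L0 \<in> carrier_mat n n" "L1 \<in> carrier_mat n n" "?G \<in> carrier_mat n n"
    using L qbd_G_carrier unfolding nonnegL_def by auto
  have GG: "?G * ?G \<in> carrier_mat n n" using c by auto
  show ?thesis
  proof (rule eq_matI)
    fix i j assume i: "i < dim_row (Lm + L0 * ?G + L1 * (?G * ?G))" and j: "j < dim_col (Lm + L0 * ?G + L1 * (?G * ?G))"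
    then have ij: "i < n" "j < n" using c by auto
    have "(Lm + L0 * ?G + L1 * (?G * ?G)) $$ (i,j) = Lm $$ (i,j) + (L0 * ?G) $$ (i,j) + (L1 * (?G * ?G)) $$ (i,j)"
      using c ij by simp
    also have "\<dots> = Lm $$ (i,j) + (\<Sum>r<n. L0 $$ (i,r) * ?G $$ (r,j)) + (\<Sum>r<n. L1 $$ (i,r) * (\<Sum>s<n. ?G $$ (r,s) * ?G $$ (s,j)))"
      using ij c GG by (simp add: mat_mult_entry[OF c(2) c(4) ij] mat_mult_entry[OF c(3) GG ij] mat_mult_entry[OF c(4) c(4)])
    also have "\<dots> = (\<Sum>k. Dm n Lm L0 L1 k 0 i j)"
      using G_equation[OF L summ ij] qbd_G_entry summ ij by simp
    also have "\<dots> = ?G $$ (i,j)" using qbd_G_entry summ ij by simp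
    finally show "?G $$ (i,j) = (Lm + L0 * ?G + L1 * (?G * ?G)) $$ (i,j)" by simp
  qed (use c in auto)
qed

lemma qbd_G_nonneg:
  assumes L: "nonnegL n Lm" "nonnegL n L0" "nonnegL n L1"
    and summ: "\<And>i j. i < n \<Longrightarrow> j < n \<Longrightarrow> summable (\<lambda>k. Dm n Lm L0 L1 k 0 i j)"
  shows "nonnegL n (qbd_G n Lm L0 L1)"
  unfolding nonnegL_def
proof (intro conjI allI impI qbd_G_carrier)
  fix i j assume ij: "i < n" "j < n"
  show "qbd_G n Lm L0 L1 $$ (i,j) \<ge> 0"
    unfolding qbd_G_entry[OF ij summ[OF ij]]
    using Dm_nonneg[OF L ij] summ[OF ij] by (intro suminf_nonneg) auto
qed

lemma qbd_G_upper:
  assumes L: "nonnegL n Lm" "nonnegL n L0" "nonnegL n L1" and X: "nonnegL n X"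
    and sup: "\<forall>i<n. \<forall>j<n. (Lm + L0 * X + L1 * (X * X)) $$ (i,j) \<le> X $$ (i,j)"
  shows "\<And>i j. i < n \<Longrightarrow> j < n \<Longrightarrow> summable (\<lambda>k. Dm n Lm L0 L1 k 0 i j)"
    and "\<And>i j. i < n \<Longrightarrow> j < n \<Longrightarrow> qbd_G n Lm L0 L1 $$ (i,j) \<le> X $$ (i,j)"
proof -
  have Xc: "X \<in> carrier_mat n n" using X unfolding nonnegL_def by auto
  have b: "PS n Lm L0 L1 N 0 i j \<le> X $$ (i,j)" if "i < n" "j < n" for N i j
    using PS_upper[OF L X sup that, where N=N and m=0] Xc that by simp
  show sm: "summable (\<lambda>k. Dm n Lm L0 L1 k 0 i j)" if "i < n" "j < n" for i j
    using b[OF that] Dm_nonneg[OF L that] unfolding PS_def by (intro summableI_nonneg_bounded) auto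
  show "qbd_G n Lm L0 L1 $$ (i,j) \<le> X $$ (i,j)" if "i < n" "j < n" for i j
    unfolding qbd_G_entry[OF that sm[OF that]]
    using b[OF that] sm[OF that] unfolding PS_def by (intro suminf_le_const) auto
qed

lemma qbd_G_rowsum:
  assumes L: "nonnegL n Lm" "nonnegL n L0" "nonnegL n L1"
    and rs: "\<forall>i<n. (\<Sum>j<n. Lm $$ (i,j) + L0 $$ (i,j) + L1 $$ (i,j)) \<le> 1"
  shows "\<And>i j. i < n \<Longrightarrow> j < n \<Longrightarrow> summable (\<lambda>k. Dm n Lm L0 L1 k 0 i j)"
    and "\<And>i. i < n \<Longrightarrow> (\<Sum>j<n. qbd_G n Lm L0 L1 $$ (i,j)) \<le> 1"
proof -
  have b: "PS n Lm L0 L1 N 0 i j \<le> 1" if "i < n" "j < n" for N i j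
  proof -
    have "PS n Lm L0 L1 N 0 i j \<le> (\<Sum>j<n. PS n Lm L0 L1 N 0 i j)"
      using that PS_nonneg[OF L that(1)] by (intro member_le_sum) auto
    also have "\<dots> \<le> 1" using PS_rowsum[OF L rs that(1)] .
    finally show ?thesis .
  qed
  show sm: "summable (\<lambda>k. Dm n Lm L0 L1 k 0 i j)" if "i < n" "j < n" for i j
    using b[OF that] Dm_nonneg[OF L that] unfolding PS_def by (intro summableI_nonneg_bounded) auto
  show "(\<Sum>j<n. qbd_G n Lm L0 L1 $$ (i,j)) \<le> 1" if i: "i < n" for i
  proof -
    have "(\<Sum>j<n. qbd_G n Lm L0 L1 $$ (i,j)) = (\<Sum>j<n. \<Sum>k. Dm n Lm L0 L1 k 0 i j)"
      using qbd_G_entry sm i by simp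
    also have "\<dots> = (\<Sum>k. \<Sum>j<n. Dm n Lm L0 L1 k 0 i j)"
      using sm i by (intro suminf_sum[symmetric]) auto
    also have "\<dots> \<le> 1"
    proof (rule suminf_le_const)
      show "summable (\<lambda>k. \<Sum>j<n. Dm n Lm L0 L1 k 0 i j)" using sm i by (intro summable_sum) auto
      fix N
      have "(\<Sum>k<N. \<Sum>j<n. Dm n Lm L0 L1 k 0 i j) = (\<Sum>j<n. PS n Lm L0 L1 N 0 i j)"
        unfolding PS_def by (rule sum.swap)
      also have "\<dots> \<le> 1" using PS_rowsum[OF L rs i] .
      finally show "(\<Sum>k<N. \<Sum>j<n. Dm n Lm L0 L1 k 0 i j) \<le> 1" .
    qed
    finally show ?thesis .
  qed
qed

lemma md_add_mult: assumes "dim_row A = dim_row B" "dim_col A = dim_col B" "dim_col A = dim_row C"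
  shows "(A + B) * (C :: 'a :: semiring_0 mat) = A * C + B * C"
  by (rule add_mult_distrib_mat[OF carrier_mat_triv[of A], where nc="dim_col C"]) (metis assms carrier_mat_triv)+
lemma md_mult_add: assumes "dim_row B = dim_row C" "dim_col B = dim_col C" "dim_col A = dim_row B"
  shows "(A :: 'a :: semiring_0 mat) * (B + C) = A * B + A * C"
  by (rule mult_add_distrib_mat[OF carrier_mat_triv[of A], where nc="dim_col B"]) (metis assms carrier_mat_triv)+
lemma md_minus_mult: assumes "dim_row A = dim_row B" "dim_col A = dim_col B" "dim_col A = dim_row C"
  shows "(A - B) * (C :: 'a :: ring mat) = A * C - B * C"
  by (rule minus_mult_distrib_mat[OF carrier_mat_triv[of A], where nc="dim_col C"]) (metis assms carrier_mat_triv)+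
lemma md_mult_minus: assumes "dim_row B = dim_row C" "dim_col B = dim_col C" "dim_col A = dim_row B"
  shows "(A :: 'a :: ring mat) * (B - C) = A * B - A * C"
  by (rule mult_minus_distrib_mat[OF carrier_mat_triv[of A], where nc="dim_col B"]) (metis assms carrier_mat_triv)+
lemma md_smult_mult: assumes "dim_col A = dim_row B" shows "(k \<cdot>\<^sub>m A) * B = (k :: 'a :: comm_semiring_0) \<cdot>\<^sub>m (A * B)"
  by (rule mult_smult_assoc_mat[OF carrier_mat_triv[of A], where nc="dim_col B"]) (metis assms carrier_mat_triv)
lemma md_mult_smult: assumes "dim_col A = dim_row B" shows "A * (k \<cdot>\<^sub>m B) = (k :: 'a :: comm_semiring_0) \<cdot>\<^sub>m (A * B)"
  by (rule mult_smult_distrib[OF carrier_mat_triv[of A], where nc="dim_col B"]) (metis assms carrier_mat_triv)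
lemma md_assoc: assumes "dim_col A = dim_row B" "dim_col B = dim_row C"
  shows "(A * B) * (C :: 'a :: semiring_0 mat) = A * (B * C)"
  by (rule assoc_mult_mat[OF carrier_mat_triv[of A], where ?n\<^sub>3="dim_col B" and ?n\<^sub>4="dim_col C"]) (metis assms carrier_mat_triv)+
lemma md_smult_add: assumes "dim_row A = dim_row B" "dim_col A = dim_col B"
  shows "k \<cdot>\<^sub>m (A + B) = (k :: 'a :: semiring) \<cdot>\<^sub>m A + k \<cdot>\<^sub>m B"
  by (rule add_smult_distrib_left_mat[OF carrier_mat_triv[of A]]) (metis assms carrier_mat_triv)
lemma md_smult_minus: assumes "dim_row A = dim_row B" "dim_col A = dim_col B"
  shows "k \<cdot>\<^sub>m (A - B) = (k :: 'a :: ring) \<cdot>\<^sub>m A - k \<cdot>\<^sub>m B"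
  using assms by (intro eq_matI) (simp_all add: right_diff_distrib)
lemma md_smult_smult: "k \<cdot>\<^sub>m (l \<cdot>\<^sub>m A) = ((k * l) :: 'a :: semigroup_mult) \<cdot>\<^sub>m A"
  by (intro eq_matI) (simp_all add: mult.assoc)

lemmas md = md_add_mult md_mult_add md_minus_mult md_mult_minus md_smult_mult md_mult_smult
  md_assoc md_smult_add md_smult_minus md_smult_smult

lemma carrier_dims: "A \<in> carrier_mat nr nc \<Longrightarrow> dim_row A = nr \<and> dim_col A = nc" by auto

lemma Qalg:
  fixes U N :: "real mat" and a b :: real
  assumes U: "U \<in> carrier_mat q q" and N: "N \<in> carrier_mat q q"
    and MN: "(1\<^sub>m q - a \<cdot>\<^sub>m U) * N = 1\<^sub>m q" and NM: "N * (1\<^sub>m q - a \<cdot>\<^sub>m U) = 1\<^sub>m q"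
  shows "N * U = U * N"
    and "(1\<^sub>m q - a \<cdot>\<^sub>m U) * ((1\<^sub>m q + b \<cdot>\<^sub>m U) * N) = 1\<^sub>m q + b \<cdot>\<^sub>m U"
    and "((1\<^sub>m q + b \<cdot>\<^sub>m U) * N) * (1\<^sub>m q - a \<cdot>\<^sub>m U) = 1\<^sub>m q + b \<cdot>\<^sub>m U"
    and "\<And>B. B \<in> carrier_mat q q \<Longrightarrow> (1\<^sub>m q - a \<cdot>\<^sub>m U) * B = 1\<^sub>m q + b \<cdot>\<^sub>m U \<Longrightarrow> B = (1\<^sub>m q + b \<cdot>\<^sub>m U) * N"
proof -
  let ?M = "1\<^sub>m q - a \<cdot>\<^sub>m U"
  note d = carrier_dims[OF U] carrier_dims[OF N]
  have UM: "U * ?M = ?M * U" using d by (simp add: md)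
  show NU: "N * U = U * N"
  proof -
    have "N * U = N * U * (?M * N)" using MN d by simp
    also have "\<dots> = N * (U * ?M) * N" using d by (simp add: md)
    also have "\<dots> = N * (?M * U) * N" by (simp add: UM)
    also have "\<dots> = (N * ?M) * U * N" using d by (simp add: md_assoc)
    also have "\<dots> = U * N" using NM d by simp
    finally show ?thesis .
  qed
  have MP: "?M * (1\<^sub>m q + b \<cdot>\<^sub>m U) = (1\<^sub>m q + b \<cdot>\<^sub>m U) * ?M"
  proof -
    have "?M * (1\<^sub>m q + b \<cdot>\<^sub>m U) = ?M + b \<cdot>\<^sub>m (?M * U)" using d by (simp add: md_mult_add md_mult_smult)
    also have "\<dots> = ?M + b \<cdot>\<^sub>m (U * ?M)" by (simp add: UM)
    also have "\<dots> = (1\<^sub>m q + b \<cdot>\<^sub>m U) * ?M" using d by (simp add: md_add_mult md_smult_mult)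
    finally show ?thesis .
  qed
  show "?M * ((1\<^sub>m q + b \<cdot>\<^sub>m U) * N) = 1\<^sub>m q + b \<cdot>\<^sub>m U"
  proof -
    have "?M * ((1\<^sub>m q + b \<cdot>\<^sub>m U) * N) = (?M * (1\<^sub>m q + b \<cdot>\<^sub>m U)) * N"
      using d by (simp add: md_assoc)
    also have "\<dots> = (1\<^sub>m q + b \<cdot>\<^sub>m U) * (?M * N)" using d by (simp add: MP md_assoc)
    finally show ?thesis using MN d by simp
  qed
  show "((1\<^sub>m q + b \<cdot>\<^sub>m U) * N) * ?M = 1\<^sub>m q + b \<cdot>\<^sub>m U"
    using d NM by (simp add: md_assoc)
  fix B assume B: "B \<in> carrier_mat q q" and MB: "?M * B = 1\<^sub>m q + b \<cdot>\<^sub>m U"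
  note dB = carrier_dims[OF B]
  have "B = (N * ?M) * B" using NM dB by simp
  also have "\<dots> = N * (1\<^sub>m q + b \<cdot>\<^sub>m U)" using d dB MB by (simp add: md_assoc)
  also have "\<dots> = N + b \<cdot>\<^sub>m (N * U)" using d by (simp add: md_mult_add md_mult_smult)
  also have "\<dots> = (1\<^sub>m q + b \<cdot>\<^sub>m U) * N" using d by (simp add: NU md_add_mult md_smult_mult)
  finally show "B = (1\<^sub>m q + b \<cdot>\<^sub>m U) * N" .
qed

lemma right_cancel:
  fixes X Y M N :: "real mat"
  assumes "X \<in> carrier_mat r q" "Y \<in> carrier_mat r q" "M \<in> carrier_mat q q" "N \<in> carrier_mat q q"
    and "M * N = 1\<^sub>m q" and "X * M = Y * M"
  shows "X = Y"
proof -
  note d = carrier_dims[OF assms(1)] carrier_dims[OF assms(2)] carrier_dims[OF assms(3)] carrier_dims[OF assms(4)]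
  have "X = X * (M * N)" using assms d by simp
  also have "\<dots> = (X * M) * N" using d by (simp add: md_assoc)
  also have "\<dots> = (Y * M) * N" using assms by simp
  also have "\<dots> = Y * (M * N)" using d by (simp add: md_assoc)
  also have "\<dots> = Y" using assms d by simp
  finally show ?thesis .
qed

lemma Balg:
  fixes U N B :: "real mat" and a b :: real
  assumes U: "U \<in> carrier_mat q q" and N: "N \<in> carrier_mat q q" and B: "B \<in> carrier_mat q q"
    and MN: "(1\<^sub>m q - a \<cdot>\<^sub>m U) * N = 1\<^sub>m q"
    and BM: "B * (1\<^sub>m q - a \<cdot>\<^sub>m U) = 1\<^sub>m q + b \<cdot>\<^sub>m U"
  shows "(b \<cdot>\<^sub>m 1\<^sub>m q + a \<cdot>\<^sub>m B) * (1\<^sub>m q - a \<cdot>\<^sub>m U) = (a + b) \<cdot>\<^sub>m 1\<^sub>m q"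
    and "(1\<^sub>m q - B) * (1\<^sub>m q - a \<cdot>\<^sub>m U) = (- (a + b)) \<cdot>\<^sub>m U"
    and "1\<^sub>m q - B = - (U * (b \<cdot>\<^sub>m 1\<^sub>m q + a \<cdot>\<^sub>m B))"
proof -
  let ?M = "1\<^sub>m q - a \<cdot>\<^sub>m U"
  note d = carrier_dims[OF U] carrier_dims[OF N] carrier_dims[OF B]
  show I1: "(b \<cdot>\<^sub>m 1\<^sub>m q + a \<cdot>\<^sub>m B) * ?M = (a + b) \<cdot>\<^sub>m 1\<^sub>m q"
  proof -
    have "(b \<cdot>\<^sub>m 1\<^sub>m q + a \<cdot>\<^sub>m B) * ?M = b \<cdot>\<^sub>m ?M + a \<cdot>\<^sub>m (B * ?M)"
      using d by (simp add: md_add_mult md_smult_mult)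
    also have "\<dots> = b \<cdot>\<^sub>m ?M + a \<cdot>\<^sub>m (1\<^sub>m q + b \<cdot>\<^sub>m U)" by (simp add: BM)
    also have "\<dots> = (a + b) \<cdot>\<^sub>m 1\<^sub>m q" using d by (intro eq_matI) (auto simp: algebra_simps)
    finally show ?thesis .
  qed
  show I2: "(1\<^sub>m q - B) * ?M = (- (a + b)) \<cdot>\<^sub>m U"
  proof -
    have "(1\<^sub>m q - B) * ?M = ?M - B * ?M" using d by (simp add: md_minus_mult)
    also have "\<dots> = ?M - (1\<^sub>m q + b \<cdot>\<^sub>m U)" by (simp add: BM)
    also have "\<dots> = (- (a + b)) \<cdot>\<^sub>m U" using d by (intro eq_matI) (auto simp: algebra_simps)
    finally show ?thesis .
  qed
  show "1\<^sub>m q - B = - (U * (b \<cdot>\<^sub>m 1\<^sub>m q + a \<cdot>\<^sub>m B))"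
  proof (rule right_cancel[where M="?M" and N=N])
    show "(1\<^sub>m q - B) * ?M = (- (U * (b \<cdot>\<^sub>m 1\<^sub>m q + a \<cdot>\<^sub>m B))) * ?M"
    proof -
      have "(- (U * (b \<cdot>\<^sub>m 1\<^sub>m q + a \<cdot>\<^sub>m B))) * ?M = - (U * ((b \<cdot>\<^sub>m 1\<^sub>m q + a \<cdot>\<^sub>m B) * ?M))"
        using d by (simp add: md_assoc)
      also have "\<dots> = - (U * ((a + b) \<cdot>\<^sub>m 1\<^sub>m q))" by (simp add: I1)
      also have "\<dots> = (- (a + b)) \<cdot>\<^sub>m U" using d by (intro eq_matI) (auto simp: md_mult_smult algebra_simps)
      finally show ?thesis using I2 by simp
    qed
  qed (use d MN in \<open>auto intro: minus_carrier_mat\<close>)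
qed

lemma Palg:
  fixes A Tpp Tpm Tmp Tmm B N :: "real mat" and a b :: real
  assumes A: "A \<in> carrier_mat p q" and Tpp: "Tpp \<in> carrier_mat p p" and Tpm: "Tpm \<in> carrier_mat p q"
    and Tmp: "Tmp \<in> carrier_mat q p" and Tmm: "Tmm \<in> carrier_mat q q"
    and N: "N \<in> carrier_mat q q" and B: "B \<in> carrier_mat q q"
    and MN: "(1\<^sub>m q - a \<cdot>\<^sub>m (Tmm + Tmp * A)) * N = 1\<^sub>m q"
    and BM: "B * (1\<^sub>m q - a \<cdot>\<^sub>m (Tmm + Tmp * A)) = 1\<^sub>m q + b \<cdot>\<^sub>m (Tmm + Tmp * A)"
    and ab: "a + b \<noteq> 0"
  shows "A * (1\<^sub>m q - B) = (Tpm + Tpp * A) * (b \<cdot>\<^sub>m 1\<^sub>m q + a \<cdot>\<^sub>m B)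
     \<longleftrightarrow> Tpm + A * Tmm + Tpp * A + A * Tmp * A = 0\<^sub>m p q"
proof -
  define U where "U = Tmm + Tmp * A"
  define V where "V = Tpm + Tpp * A"
  let ?M = "1\<^sub>m q - a \<cdot>\<^sub>m U"
  have U: "U \<in> carrier_mat q q" unfolding U_def using Tmm Tmp A by auto
  have V: "V \<in> carrier_mat p q" unfolding V_def using Tpm Tpp A by auto
  note d = carrier_dims[OF A] carrier_dims[OF Tpp] carrier_dims[OF Tpm] carrier_dims[OF Tmp]
    carrier_dims[OF Tmm] carrier_dims[OF N] carrier_dims[OF B] carrier_dims[OF U] carrier_dims[OF V]
  note BA = Balg[OF U N B MN[folded U_def] BM[folded U_def]]
  have ric: "Tpm + A * Tmm + Tpp * A + A * Tmp * A = V + A * U"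
  proof -
    have "A * U = A * Tmm + (A * Tmp) * A" unfolding U_def using d by (simp add: md_mult_add md_assoc)
    then show ?thesis unfolding V_def using d by (intro eq_matI) (auto simp: algebra_simps)
  qed
  have "A * (1\<^sub>m q - B) = V * (b \<cdot>\<^sub>m 1\<^sub>m q + a \<cdot>\<^sub>m B) \<longleftrightarrow> V + A * U = 0\<^sub>m p q"
  proof
    assume h: "A * (1\<^sub>m q - B) = V * (b \<cdot>\<^sub>m 1\<^sub>m q + a \<cdot>\<^sub>m B)"
    have "A * ((1\<^sub>m q - B) * ?M) = (A * (1\<^sub>m q - B)) * ?M"
      using d by (subst md_assoc) simp_all
    also have "\<dots> = (V * (b \<cdot>\<^sub>m 1\<^sub>m q + a \<cdot>\<^sub>m B)) * ?M" by (simp only: h)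
    also have "\<dots> = V * ((b \<cdot>\<^sub>m 1\<^sub>m q + a \<cdot>\<^sub>m B) * ?M)"
      using d by (subst md_assoc) simp_all
    finally have "A * ((1\<^sub>m q - B) * ?M) = V * ((b \<cdot>\<^sub>m 1\<^sub>m q + a \<cdot>\<^sub>m B) * ?M)" .
    then have "A * ((- (a + b)) \<cdot>\<^sub>m U) = V * ((a + b) \<cdot>\<^sub>m 1\<^sub>m q)" using BA(1,2) by simp
    then have e: "(- (a + b)) \<cdot>\<^sub>m (A * U) = (a + b) \<cdot>\<^sub>m V" using d by (simp add: md_mult_smult)
    show "V + A * U = 0\<^sub>m p q"
    proof (rule eq_matI)
      fix i j assume ij: "i < dim_row (0\<^sub>m p q :: real mat)" "j < dim_col (0\<^sub>m p q :: real mat)"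
      have "(- (a + b)) * (A * U) $$ (i,j) = (a + b) * V $$ (i,j)"
        using arg_cong[OF e, of "\<lambda>X. X $$ (i,j)"] ij d by simp
      then have "(a + b) * (V $$ (i,j) + (A * U) $$ (i,j)) = 0" by (simp add: algebra_simps)
      then show "(V + A * U) $$ (i,j) = 0\<^sub>m p q $$ (i,j)" using ab ij d by simp
    qed (use d in auto)
  next
    assume h: "V + A * U = 0\<^sub>m p q"
    have VA: "V = - (A * U)"
    proof (rule eq_matI)
      fix i j assume ij: "i < dim_row (- (A * U))" "j < dim_col (- (A * U))"
      have "(V + A * U) $$ (i,j) = 0" using h ij d by simp
      then show "V $$ (i,j) = (- (A * U)) $$ (i,j)" using ij d by (simp add: add_eq_0_iff)
    qed (use d in auto)
    have "V * (b \<cdot>\<^sub>m 1\<^sub>m q + a \<cdot>\<^sub>m B) = - (A * (U * (b \<cdot>\<^sub>m 1\<^sub>m q + a \<cdot>\<^sub>m B)))"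
      unfolding VA using d by (simp add: md_assoc)
    also have "\<dots> = A * (1\<^sub>m q - B)" unfolding BA(3) using d by (subst uminus_mult_right_mat) simp_all
    finally show "A * (1\<^sub>m q - B) = V * (b \<cdot>\<^sub>m 1\<^sub>m q + a \<cdot>\<^sub>m B)" by simp
  qed
  then show ?thesis unfolding ric V_def U_def .
qed

declare index_mult_mat(1)[simp del]

definition zsdd :: "nat \<Rightarrow> real mat \<Rightarrow> bool" where
  "zsdd k M \<longleftrightarrow> M \<in> carrier_mat k k \<and> (\<forall>i<k. \<forall>j<k. i \<noteq> j \<longrightarrow> M $$ (i,j) \<le> 0)
     \<and> (\<forall>i<k. (\<Sum>j<k. M $$ (i,j)) > 0)"

lemma zsdd_maxprinciple:
  assumes Z: "zsdd k M" and X: "X \<in> carrier_mat k c"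
    and pos: "\<forall>i<k. \<forall>j<c. (M * X) $$ (i,j) \<ge> 0"
    and ij: "i < k" "j < c"
  shows "X $$ (i,j) \<ge> 0"
proof (rule ccontr)
  assume neg: "\<not> X $$ (i,j) \<ge> 0"
  have M: "M \<in> carrier_mat k k" using Z unfolding zsdd_def by auto
  obtain i0 where i0: "i0 < k" "\<forall>r<k. X $$ (i0,j) \<le> X $$ (r,j)"
  proof -
    have "finite ((\<lambda>r. X $$ (r,j)) ` {..<k})" "(\<lambda>r. X $$ (r,j)) ` {..<k} \<noteq> {}" using ij by auto
    then have "Min ((\<lambda>r. X $$ (r,j)) ` {..<k}) \<in> (\<lambda>r. X $$ (r,j)) ` {..<k}" by (rule Min_in)
    then obtain i0 where "i0 < k" "X $$ (i0,j) = Min ((\<lambda>r. X $$ (r,j)) ` {..<k})" by auto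
    moreover have "\<forall>r<k. Min ((\<lambda>r. X $$ (r,j)) ` {..<k}) \<le> X $$ (r,j)" by auto
    ultimately show ?thesis using that by auto
  qed
  have xneg: "X $$ (i0,j) < 0" using i0 ij neg by force
  have "(M * X) $$ (i0,j) = (\<Sum>r<k. M $$ (i0,r) * X $$ (r,j))"
    using M X i0 ij by (simp add: mat_mult_entry)
  also have "\<dots> \<le> (\<Sum>r<k. M $$ (i0,r) * X $$ (i0,j))"
  proof (rule sum_mono)
    fix r assume r: "r \<in> {..<k}"
    show "M $$ (i0,r) * X $$ (r,j) \<le> M $$ (i0,r) * X $$ (i0,j)"
    proof (cases "r = i0")
      case False
      then have "M $$ (i0,r) \<le> 0" using Z r i0 unfolding zsdd_def by auto
      then show ?thesis using i0 r by (intro mult_left_mono_neg) auto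
    qed simp
  qed
  also have "\<dots> = (\<Sum>r<k. M $$ (i0,r)) * X $$ (i0,j)" by (simp add: sum_distrib_right)
  also have "\<dots> < 0" using Z i0 xneg unfolding zsdd_def by (intro mult_pos_neg) auto
  finally show False using pos i0 ij by force
qed

lemma zsdd_inverse:
  assumes Z: "zsdd k M"
  shows "M * minv M = 1\<^sub>m k" "minv M * M = 1\<^sub>m k" "minv M \<in> carrier_mat k k"
    and "\<forall>i<k. \<forall>j<k. minv M $$ (i,j) \<ge> 0"
proof -
  have M: "M \<in> carrier_mat k k" using Z unfolding zsdd_def by auto
  have inj: "v = 0\<^sub>v k" if v: "v \<in> carrier_vec k" "M *\<^sub>v v = 0\<^sub>v k" for v
  proof -
    define X where "X = mat k 1 (\<lambda>(i,_). v $ i)"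
    have X: "X \<in> carrier_mat k 1" unfolding X_def by simp
    have MX: "(M * X) $$ (i,0) = 0" if "i < k" for i
    proof -
      have "(M * X) $$ (i,0) = (\<Sum>r<k. M $$ (i,r) * X $$ (r,0))" using M X that by (simp add: mat_mult_entry)
      also have "\<dots> = (\<Sum>r<k. M $$ (i,r) * v $ r)" unfolding X_def by simp
      also have "\<dots> = (M *\<^sub>v v) $ i" using M v(1) that by (simp add: scalar_prod_def atLeast0LessThan)
      finally show ?thesis using v that by simp
    qed
    have MX': "(M * (- X)) $$ (i,0) = 0" if "i < k" for i
      using MX[OF that] M X that by (simp add: uminus_mult_right_mat)
    have "X $$ (i,0) \<ge> 0" if "i < k" for i
      using zsdd_maxprinciple[OF Z X _ that] MX by simp
    moreover have "(- X) $$ (i,0) \<ge> 0" if "i < k" for i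
      using zsdd_maxprinciple[OF Z _ _ that, of "- X"] MX' X by simp
    ultimately have "X $$ (i,0) = 0" if "i < k" for i using that X by force
    then show "v = 0\<^sub>v k" using v unfolding X_def by (intro eq_vecI) auto
  qed
  have "det M \<noteq> 0" using det_0_iff_vec_prod_zero_field[OF M] inj by auto
  then have U: "M \<in> Units (ring_mat TYPE(real) k ())" by (rule det_non_zero_imp_unit[OF M])
  obtain B where B: "mat_inverse M = Some B"
    using mat_inverse(1)[OF M] U by (cases "mat_inverse M") (auto dest: mat_inverse(1)[OF M, where b="()"])
  have mB: "minv M = B" unfolding minv_def B by simp
  note BB = mat_inverse(2)[OF M B]
  show MB: "M * minv M = 1\<^sub>m k" "minv M * M = 1\<^sub>m k" "minv M \<in> carrier_mat k k" using BB mB by auto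
  show "\<forall>i<k. \<forall>j<k. minv M $$ (i,j) \<ge> 0"
  proof (intro allI impI)
    fix i j assume ij: "i < k" "j < k"
    show "minv M $$ (i,j) \<ge> 0"
      by (rule zsdd_maxprinciple[OF Z MB(3) _ ij]) (simp add: MB(1))
  qed
qed

lemma blk_carrier:
  assumes "M \<in> carrier_mat (p+q) (p+q)"
  shows "blk_pp p M \<in> carrier_mat p p" "blk_pm p M \<in> carrier_mat p q"
    "blk_mp p M \<in> carrier_mat q p" "blk_mm p M \<in> carrier_mat q q"
  using assms by (auto simp: blk_pp_def blk_pm_def blk_mp_def blk_mm_def)

lemma blk_decomp:
  assumes "M \<in> carrier_mat (p+q) (p+q)"
  shows "M = four_block_mat (blk_pp p M) (blk_pm p M) (blk_mp p M) (blk_mm p M)"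
  using assms by (intro eq_matI) (auto simp: blk_pp_def blk_pm_def blk_mp_def blk_mm_def)

lemma blk_of_four:
  assumes "A \<in> carrier_mat p p" "B \<in> carrier_mat p q" "C \<in> carrier_mat q p" "D \<in> carrier_mat q q"
  shows "blk_pp p (four_block_mat A B C D) = A" "blk_pm p (four_block_mat A B C D) = B"
    "blk_mp p (four_block_mat A B C D) = C" "blk_mm p (four_block_mat A B C D) = D"
  using assms by (auto intro!: eq_matI simp: blk_pp_def blk_pm_def blk_mp_def blk_mm_def)

lemma blk_entry:
  assumes "M \<in> carrier_mat (p+q) (p+q)" "i < p+q" "j < p+q"
  shows "M $$ (i,j) = (if i < p then (if j < p then blk_pp p M $$ (i,j) else blk_pm p M $$ (i, j-p))
     else (if j < p then blk_mp p M $$ (i-p, j) else blk_mm p M $$ (i-p, j-p)))"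
  using assms by (auto simp: blk_pp_def blk_pm_def blk_mp_def blk_mm_def)

lemma blk_mult:
  assumes X: "X \<in> carrier_mat (p+q) (p+q)" and Y: "Y \<in> carrier_mat (p+q) (p+q)"
  shows "blk_pp p (X * Y) = blk_pp p X * blk_pp p Y + blk_pm p X * blk_mp p Y"
    "blk_pm p (X * Y) = blk_pp p X * blk_pm p Y + blk_pm p X * blk_mm p Y"
    "blk_mp p (X * Y) = blk_mp p X * blk_pp p Y + blk_mm p X * blk_mp p Y"
    "blk_mm p (X * Y) = blk_mp p X * blk_pm p Y + blk_mm p X * blk_mm p Y"
proof -
  note cX = blk_carrier[OF X] and cY = blk_carrier[OF Y]
  have "X * Y = four_block_mat (blk_pp p X) (blk_pm p X) (blk_mp p X) (blk_mm p X) *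
     four_block_mat (blk_pp p Y) (blk_pm p Y) (blk_mp p Y) (blk_mm p Y)"
    using blk_decomp[OF X] blk_decomp[OF Y] by simp
  also have "\<dots> = four_block_mat (blk_pp p X * blk_pp p Y + blk_pm p X * blk_mp p Y)
     (blk_pp p X * blk_pm p Y + blk_pm p X * blk_mm p Y)
     (blk_mp p X * blk_pp p Y + blk_mm p X * blk_mp p Y)
     (blk_mp p X * blk_pm p Y + blk_mm p X * blk_mm p Y)"
    by (rule mult_four_block_mat[OF cX cY])
  finally have e: "X * Y = \<dots>" .
  show "blk_pp p (X * Y) = blk_pp p X * blk_pp p Y + blk_pm p X * blk_mp p Y"
    "blk_pm p (X * Y) = blk_pp p X * blk_pm p Y + blk_pm p X * blk_mm p Y"
    "blk_mp p (X * Y) = blk_mp p X * blk_pp p Y + blk_mm p X * blk_mp p Y"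
    "blk_mm p (X * Y) = blk_mp p X * blk_pm p Y + blk_mm p X * blk_mm p Y"
    unfolding e using cX cY by (subst blk_of_four; auto)+
qed

lemma blk_add:
  assumes X: "X \<in> carrier_mat (p+q) (p+q)" and Y: "Y \<in> carrier_mat (p+q) (p+q)"
  shows "blk_pp p (X + Y) = blk_pp p X + blk_pp p Y" "blk_pm p (X + Y) = blk_pm p X + blk_pm p Y"
    "blk_mp p (X + Y) = blk_mp p X + blk_mp p Y" "blk_mm p (X + Y) = blk_mm p X + blk_mm p Y"
  using assms by (auto intro!: eq_matI simp: blk_pp_def blk_pm_def blk_mp_def blk_mm_def)

lemma blk_smult:
  assumes X: "X \<in> carrier_mat (p+q) (p+q)"
  shows "blk_pp p (c \<cdot>\<^sub>m X) = c \<cdot>\<^sub>m blk_pp p X" "blk_pm p (c \<cdot>\<^sub>m X) = c \<cdot>\<^sub>m blk_pm p X"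
    "blk_mp p (c \<cdot>\<^sub>m X) = c \<cdot>\<^sub>m blk_mp p X" "blk_mm p (c \<cdot>\<^sub>m X) = c \<cdot>\<^sub>m blk_mm p X"
  using assms by (auto intro!: eq_matI simp: blk_pp_def blk_pm_def blk_mp_def blk_mm_def)

lemma blk_P:
  fixes T :: "real mat"
  assumes T: "T \<in> carrier_mat (p+q) (p+q)"
  shows "blk_pp p (1\<^sub>m (p+q) + c \<cdot>\<^sub>m T) = 1\<^sub>m p + c \<cdot>\<^sub>m blk_pp p T"
    "blk_pm p (1\<^sub>m (p+q) + c \<cdot>\<^sub>m T) = c \<cdot>\<^sub>m blk_pm p T"
    "blk_mp p (1\<^sub>m (p+q) + c \<cdot>\<^sub>m T) = c \<cdot>\<^sub>m blk_mp p T"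
    "blk_mm p (1\<^sub>m (p+q) + c \<cdot>\<^sub>m T) = 1\<^sub>m q + c \<cdot>\<^sub>m blk_mm p T"
  using assms by (auto intro!: eq_matI simp: blk_pp_def blk_pm_def blk_mp_def blk_mm_def)

lemma RHS_blocks:
  fixes Lm L0 L1 X :: "real mat"
  assumes c: "Lm \<in> carrier_mat (p+q) (p+q)" "L0 \<in> carrier_mat (p+q) (p+q)" "L1 \<in> carrier_mat (p+q) (p+q)"
    "X \<in> carrier_mat (p+q) (p+q)"
    and z: "blk_pp p X = 0\<^sub>m p p" "blk_mp p X = 0\<^sub>m q p"
    and zm: "blk_pp p Lm = 0\<^sub>m p p" "blk_mp p Lm = 0\<^sub>m q p"
    and z1: "blk_pm p L1 = 0\<^sub>m p q" "blk_mm p L1 = 0\<^sub>m q q"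
  shows "blk_pp p (Lm + L0 * X + L1 * (X * X)) = 0\<^sub>m p p"
    "blk_mp p (Lm + L0 * X + L1 * (X * X)) = 0\<^sub>m q p"
    "blk_pm p (Lm + L0 * X + L1 * (X * X)) = blk_pm p Lm + blk_pp p L0 * blk_pm p X + blk_pm p L0 * blk_mm p X
        + blk_pp p L1 * (blk_pm p X * blk_mm p X)"
    "blk_mm p (Lm + L0 * X + L1 * (X * X)) = blk_mm p Lm + blk_mp p L0 * blk_pm p X + blk_mm p L0 * blk_mm p X
        + blk_mp p L1 * (blk_pm p X * blk_mm p X)"
proof -
  note bm = blk_carrier[OF c(1)] and b0 = blk_carrier[OF c(2)] and b1 = blk_carrier[OF c(3)] and bx = blk_carrier[OF c(4)]
  have cXX: "X * X \<in> carrier_mat (p+q) (p+q)" using c by auto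
  have c0X: "L0 * X \<in> carrier_mat (p+q) (p+q)" using c by auto
  have c1XX: "L1 * (X * X) \<in> carrier_mat (p+q) (p+q)" using c by auto
  have cs: "Lm + L0 * X \<in> carrier_mat (p+q) (p+q)" using c by auto
  have XX: "blk_pp p (X * X) = 0\<^sub>m p p" "blk_pm p (X * X) = blk_pm p X * blk_mm p X"
      "blk_mp p (X * X) = 0\<^sub>m q p" "blk_mm p (X * X) = blk_mm p X * blk_mm p X"
    unfolding blk_mult[OF c(4) c(4)] z using bx by auto
  note e = blk_add[OF cs c1XX] blk_add[OF c(1) c0X] blk_mult[OF c(2) c(4)] blk_mult[OF c(3) cXX]
  show "blk_pp p (Lm + L0 * X + L1 * (X * X)) = 0\<^sub>m p p"
    unfolding e XX z zm z1 using bm b0 b1 bx by simp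
  show "blk_mp p (Lm + L0 * X + L1 * (X * X)) = 0\<^sub>m q p"
    unfolding e XX z zm z1 using bm b0 b1 bx by simp
  show "blk_pm p (Lm + L0 * X + L1 * (X * X)) = blk_pm p Lm + blk_pp p L0 * blk_pm p X + blk_pm p L0 * blk_mm p X
        + blk_pp p L1 * (blk_pm p X * blk_mm p X)"
    unfolding e XX z zm z1 using bm b0 b1 bx by (simp add: assoc_add_mat[of _ p q])
  show "blk_mm p (Lm + L0 * X + L1 * (X * X)) = blk_mm p Lm + blk_mp p L0 * blk_pm p X + blk_mm p L0 * blk_mm p X
        + blk_mp p L1 * (blk_pm p X * blk_mm p X)"
    unfolding e XX z zm z1 using bm b0 b1 bx by (simp add: assoc_add_mat[of _ q q])
qed

lemma mat_eq_entries:
  fixes X Y :: "real mat"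
  assumes "X \<in> carrier_mat r c" "Y \<in> carrier_mat r c"
  shows "X = Y \<longleftrightarrow> (\<forall>i<r. \<forall>j<c. X $$ (i,j) = Y $$ (i,j))"
  using assms by (auto intro!: eq_matI)

lemma eq_iff_entries:
  fixes X Y :: "'a mat"
  shows "X = Y \<longleftrightarrow> dim_row X = dim_row Y \<and> dim_col X = dim_col Y \<and> (\<forall>i<dim_row Y. \<forall>j<dim_col Y. X $$ (i,j) = Y $$ (i,j))"
  by (auto intro!: eq_matI)

lemma ball2_iff: "(\<And>i j. i < r \<Longrightarrow> j < c \<Longrightarrow> P i j \<longleftrightarrow> Q i j) \<Longrightarrow>
  (\<forall>i<r. \<forall>j<c. P i j) \<longleftrightarrow> (\<forall>i<r. \<forall>j<c. Q i j)" by auto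

lemma canon_pm:
  fixes Tpp Tpm A B :: "real mat" and a b :: real
  assumes Tpp: "Tpp \<in> carrier_mat p p" and Tpm: "Tpm \<in> carrier_mat p q"
    and A: "A \<in> carrier_mat p q" and B: "B \<in> carrier_mat q q"
  shows "(1/2) \<cdot>\<^sub>m (b \<cdot>\<^sub>m Tpm) + ((1/2) \<cdot>\<^sub>m (1\<^sub>m p + b \<cdot>\<^sub>m Tpp)) * A + ((1/2) \<cdot>\<^sub>m (a \<cdot>\<^sub>m Tpm)) * B
      + ((1/2) \<cdot>\<^sub>m (1\<^sub>m p + a \<cdot>\<^sub>m Tpp)) * (A * B) = A
     \<longleftrightarrow> A * (1\<^sub>m q - B) = (Tpm + Tpp * A) * (b \<cdot>\<^sub>m 1\<^sub>m q + a \<cdot>\<^sub>m B)"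
    and "(1/2) \<cdot>\<^sub>m (b \<cdot>\<^sub>m Tpm) + ((1/2) \<cdot>\<^sub>m (1\<^sub>m p + b \<cdot>\<^sub>m Tpp)) * A + ((1/2) \<cdot>\<^sub>m (a \<cdot>\<^sub>m Tpm)) * B
      + ((1/2) \<cdot>\<^sub>m (1\<^sub>m p + a \<cdot>\<^sub>m Tpp)) * (A * B) = A
     \<longleftrightarrow> (1\<^sub>m p - b \<cdot>\<^sub>m Tpp) * A = b \<cdot>\<^sub>m Tpm + (a \<cdot>\<^sub>m Tpm) * B + (1\<^sub>m p + a \<cdot>\<^sub>m Tpp) * (A * B)"
proof -
  have d: "dim_row Tpp = p" "dim_col Tpp = p" "dim_row Tpm = p" "dim_col Tpm = q"
    "dim_row A = p" "dim_col A = q" "dim_row B = q" "dim_col B = q" using assms by auto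
  show "(1/2) \<cdot>\<^sub>m (b \<cdot>\<^sub>m Tpm) + ((1/2) \<cdot>\<^sub>m (1\<^sub>m p + b \<cdot>\<^sub>m Tpp)) * A + ((1/2) \<cdot>\<^sub>m (a \<cdot>\<^sub>m Tpm)) * B
      + ((1/2) \<cdot>\<^sub>m (1\<^sub>m p + a \<cdot>\<^sub>m Tpp)) * (A * B) = A
     \<longleftrightarrow> A * (1\<^sub>m q - B) = (Tpm + Tpp * A) * (b \<cdot>\<^sub>m 1\<^sub>m q + a \<cdot>\<^sub>m B)"
    using d by (simp add: md eq_iff_entries, intro ball2_iff, intro iffI; linarith)
  show "(1/2) \<cdot>\<^sub>m (b \<cdot>\<^sub>m Tpm) + ((1/2) \<cdot>\<^sub>m (1\<^sub>m p + b \<cdot>\<^sub>m Tpp)) * A + ((1/2) \<cdot>\<^sub>m (a \<cdot>\<^sub>m Tpm)) * B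
      + ((1/2) \<cdot>\<^sub>m (1\<^sub>m p + a \<cdot>\<^sub>m Tpp)) * (A * B) = A
     \<longleftrightarrow> (1\<^sub>m p - b \<cdot>\<^sub>m Tpp) * A = b \<cdot>\<^sub>m Tpm + (a \<cdot>\<^sub>m Tpm) * B + (1\<^sub>m p + a \<cdot>\<^sub>m Tpp) * (A * B)"
    using d by (simp add: md eq_iff_entries, intro ball2_iff, intro iffI; linarith)
qed

lemma canon_mm:
  fixes Tmm Tmp A B :: "real mat" and a b :: real
  assumes Tmm: "Tmm \<in> carrier_mat q q" and Tmp: "Tmp \<in> carrier_mat q p"
    and A: "A \<in> carrier_mat p q" and B: "B \<in> carrier_mat q q"
  shows "(1/2) \<cdot>\<^sub>m (1\<^sub>m q + b \<cdot>\<^sub>m Tmm) + ((1/2) \<cdot>\<^sub>m (b \<cdot>\<^sub>m Tmp)) * A + ((1/2) \<cdot>\<^sub>m (1\<^sub>m q + a \<cdot>\<^sub>m Tmm)) * B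
      + ((1/2) \<cdot>\<^sub>m (a \<cdot>\<^sub>m Tmp)) * (A * B) = B
     \<longleftrightarrow> (1\<^sub>m q - a \<cdot>\<^sub>m (Tmm + Tmp * A)) * B = 1\<^sub>m q + b \<cdot>\<^sub>m (Tmm + Tmp * A)"
proof -
  have d: "dim_row Tmm = q" "dim_col Tmm = q" "dim_row Tmp = q" "dim_col Tmp = p"
    "dim_row A = p" "dim_col A = q" "dim_row B = q" "dim_col B = q" using assms by auto
  show ?thesis
    using d apply (simp add: md eq_iff_entries del: index_one_mat(1))
    apply (intro ball2_iff)
    subgoal for i j by (cases "i = j"; simp; intro iffI; linarith)
    done
qed

lemma canon_C:
  fixes Tpp Tpm A B R :: "real mat" and a b :: real
  assumes Tpp: "Tpp \<in> carrier_mat p p" and Tpm: "Tpm \<in> carrier_mat p q"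
    and A: "A \<in> carrier_mat p q" and B: "B \<in> carrier_mat q q" and R: "R \<in> carrier_mat p p"
    and R1: "R * (1\<^sub>m p - b \<cdot>\<^sub>m Tpp) = 1\<^sub>m p" and R2: "(1\<^sub>m p - b \<cdot>\<^sub>m Tpp) * R = 1\<^sub>m p"
  shows "R * (b \<cdot>\<^sub>m Tpm) + (R * (a \<cdot>\<^sub>m Tpm)) * B + (R * (1\<^sub>m p + a \<cdot>\<^sub>m Tpp)) * (A * B) = A
    \<longleftrightarrow> (1\<^sub>m p - b \<cdot>\<^sub>m Tpp) * A = b \<cdot>\<^sub>m Tpm + (a \<cdot>\<^sub>m Tpm) * B + (1\<^sub>m p + a \<cdot>\<^sub>m Tpp) * (A * B)"
proof -
  have d: "dim_row Tpp = p" "dim_col Tpp = p" "dim_row Tpm = p" "dim_col Tpm = q"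
    "dim_row A = p" "dim_col A = q" "dim_row B = q" "dim_col B = q" "dim_row R = p" "dim_col R = p" using assms by auto
  define F where "F = b \<cdot>\<^sub>m Tpm + (a \<cdot>\<^sub>m Tpm) * B + (1\<^sub>m p + a \<cdot>\<^sub>m Tpp) * (A * B)"
  have F: "F \<in> carrier_mat p q" unfolding F_def using assms by auto
  have e: "R * (b \<cdot>\<^sub>m Tpm) + (R * (a \<cdot>\<^sub>m Tpm)) * B + (R * (1\<^sub>m p + a \<cdot>\<^sub>m Tpp)) * (A * B) = R * F"
    unfolding F_def using d by (simp add: md)
  show ?thesis unfolding e F_def[symmetric]
  proof
    assume h: "R * F = A"
    have "(1\<^sub>m p - b \<cdot>\<^sub>m Tpp) * A = ((1\<^sub>m p - b \<cdot>\<^sub>m Tpp) * R) * F" unfolding h[symmetric] using d F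
      by (subst md_assoc) auto
    then show "(1\<^sub>m p - b \<cdot>\<^sub>m Tpp) * A = F" using R2 F by simp
  next
    assume h: "(1\<^sub>m p - b \<cdot>\<^sub>m Tpp) * A = F"
    have "R * F = (R * (1\<^sub>m p - b \<cdot>\<^sub>m Tpp)) * A" unfolding h[symmetric] using d
      by (subst md_assoc) auto
    then show "R * F = A" using R1 A by simp
  qed
qed

lemma le_from_blocks:
  fixes X Y :: "real mat"
  assumes "X \<in> carrier_mat (p+q) (p+q)" "Y \<in> carrier_mat (p+q) (p+q)"
    and "\<forall>i<p. \<forall>j<p. blk_pp p X $$ (i,j) \<le> blk_pp p Y $$ (i,j)"
    and "\<forall>i<p. \<forall>j<q. blk_pm p X $$ (i,j) \<le> blk_pm p Y $$ (i,j)"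
    and "\<forall>i<q. \<forall>j<p. blk_mp p X $$ (i,j) \<le> blk_mp p Y $$ (i,j)"
    and "\<forall>i<q. \<forall>j<q. blk_mm p X $$ (i,j) \<le> blk_mm p Y $$ (i,j)"
  shows "\<forall>i<p+q. \<forall>j<p+q. X $$ (i,j) \<le> Y $$ (i,j)"
proof (intro allI impI)
  fix i j assume ij: "i < p+q" "j < p+q"
  show "X $$ (i,j) \<le> Y $$ (i,j)"
    unfolding blk_entry[OF assms(1) ij] blk_entry[OF assms(2) ij] using assms(3-6) ij by auto
qed

lemma sum_split_pq: "(\<Sum>j<p+q. f j) = (\<Sum>j<p. f j) + (\<Sum>j<q. f (j + p)) " for f :: "nat \<Rightarrow> real"
proof (induction q)
  case (Suc q)
  have "(\<Sum>j<p + Suc q. f j) = (\<Sum>j<p+q. f j) + f (p + q)" by simp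
  then show ?case using Suc by (simp add: add.commute)
qed simp

lemma nonneg_mult:
  assumes "nonneg_mat A" "nonneg_mat B" "dim_col A = dim_row B"
  shows "nonneg_mat (A * B)"
  unfolding nonneg_mat_def
proof (intro allI impI)
  fix i j assume ij: "i < dim_row (A * B)" "j < dim_col (A * B)"
  have cA: "A \<in> carrier_mat (dim_row A) (dim_col A)" by auto
  have cB: "B \<in> carrier_mat (dim_col A) (dim_col B)" by (metis assms(3) carrier_mat_triv)
  have i: "i < dim_row A" and j: "j < dim_col B" using ij by auto
  have "(A * B) $$ (i,j) = (\<Sum>r<dim_col A. A $$ (i,r) * B $$ (r,j))"
    by (rule mat_mult_entry[OF cA cB i j])
  also have "\<dots> \<ge> 0"
  proof (rule sum_nonneg)
    fix r assume r: "r \<in> {..<dim_col A}"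
    have "A $$ (i,r) \<ge> 0" using assms(1) i r unfolding nonneg_mat_def by auto
    moreover have "B $$ (r,j) \<ge> 0" using assms(2) j r assms(3) unfolding nonneg_mat_def by auto
    ultimately show "A $$ (i,r) * B $$ (r,j) \<ge> 0" by simp
  qed
  finally show "(A * B) $$ (i,j) \<ge> 0" .
qed

lemma nonneg_add: "nonneg_mat A \<Longrightarrow> nonneg_mat B \<Longrightarrow> A \<in> carrier_mat r c \<Longrightarrow> B \<in> carrier_mat r c \<Longrightarrow> nonneg_mat (A + B)"
  unfolding nonneg_mat_def carrier_mat_def by (intro allI impI, simp)

lemma nonneg_smult: "nonneg_mat A \<Longrightarrow> c \<ge> 0 \<Longrightarrow> nonneg_mat (c \<cdot>\<^sub>m A)"
  unfolding nonneg_mat_def by simp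

lemma nonneg_zero: "nonneg_mat (0\<^sub>m r c)" unfolding nonneg_mat_def by simp

lemma nonnegL_iff: "nonnegL n A \<longleftrightarrow> A \<in> carrier_mat n n \<and> nonneg_mat A"
  unfolding nonnegL_def nonneg_mat_def
proof
  assume h: "A \<in> carrier_mat n n \<and> (\<forall>i<n. \<forall>j<n. 0 \<le> A $$ (i, j))"
  then have "dim_row A = n" "dim_col A = n" by auto
  then show "A \<in> carrier_mat n n \<and> (\<forall>i<dim_row A. \<forall>j<dim_col A. 0 \<le> A $$ (i, j))" using h by simp
next
  assume h: "A \<in> carrier_mat n n \<and> (\<forall>i<dim_row A. \<forall>j<dim_col A. 0 \<le> A $$ (i, j))"
  then have "dim_row A = n" "dim_col A = n" by auto
  then show "A \<in> carrier_mat n n \<and> (\<forall>i<n. \<forall>j<n. 0 \<le> A $$ (i, j))" using h by simp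
qed

lemma nonneg_four:
  assumes "A \<in> carrier_mat p p" "B \<in> carrier_mat p q" "C \<in> carrier_mat q p" "D \<in> carrier_mat q q"
    and "nonneg_mat A" "nonneg_mat B" "nonneg_mat C" "nonneg_mat D"
  shows "nonneg_mat (four_block_mat A B C D)"
  unfolding nonneg_mat_def
proof (intro allI impI)
  fix i j assume ij: "i < dim_row (four_block_mat A B C D)" "j < dim_col (four_block_mat A B C D)"
  have d: "dim_row A = p" "dim_col A = p" "dim_row D = q" "dim_col D = q"
    "dim_row B = p" "dim_col B = q" "dim_row C = q" "dim_col C = p" using assms(1-4) by auto
  have ij': "i < p + q" "j < p + q" using ij d by auto
  show "four_block_mat A B C D $$ (i,j) \<ge> 0"
  proof (cases "i < p")
    case True
    show ?thesis
    proof (cases "j < p")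
      case True
      then show ?thesis using \<open>i < p\<close> ij' d assms(5) unfolding nonneg_mat_def by simp
    next
      case False
      then show ?thesis using \<open>i < p\<close> ij' d assms(6) unfolding nonneg_mat_def by simp
    qed
  next
    case False
    show ?thesis
    proof (cases "j < p")
      case True
      then show ?thesis using \<open>\<not> i < p\<close> ij' d assms(7) unfolding nonneg_mat_def by simp
    next
      case False
      then show ?thesis using \<open>\<not> i < p\<close> ij' d assms(8) unfolding nonneg_mat_def by simp
    qed
  qed
qed

lemma gen_blocks:
  assumes gen: "is_generator (p+q) T"
  shows "T \<in> carrier_mat (p+q) (p+q)"
    and "nonneg_mat (blk_pm p T)" "nonneg_mat (blk_mp p T)"
    and "\<forall>i<p. \<forall>j<p. i \<noteq> j \<longrightarrow> blk_pp p T $$ (i,j) \<ge> 0"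
    and "\<forall>i<q. \<forall>j<q. i \<noteq> j \<longrightarrow> blk_mm p T $$ (i,j) \<ge> 0"
    and "\<forall>i<p. (\<Sum>j<p. blk_pp p T $$ (i,j)) + (\<Sum>j<q. blk_pm p T $$ (i,j)) = 0"
    and "\<forall>i<q. (\<Sum>j<p. blk_mp p T $$ (i,j)) + (\<Sum>j<q. blk_mm p T $$ (i,j)) = 0"
    and "\<forall>i<p+q. \<forall>j<p+q. i \<noteq> j \<longrightarrow> T $$ (i,j) \<ge> 0"
    and "\<forall>i<p+q. (\<Sum>j<p+q. T $$ (i,j)) = 0"
proof -
  have T: "T \<in> carrier_mat (p+q) (p+q)" and off: "\<forall>i<p+q. \<forall>j<p+q. i \<noteq> j \<longrightarrow> T $$ (i,j) \<ge> 0"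
    and rs: "\<forall>i<p+q. (\<Sum>j<p+q. T $$ (i,j)) = 0" using gen unfolding is_generator_def by auto
  show "T \<in> carrier_mat (p+q) (p+q)" "\<forall>i<p+q. \<forall>j<p+q. i \<noteq> j \<longrightarrow> T $$ (i,j) \<ge> 0"
    "\<forall>i<p+q. (\<Sum>j<p+q. T $$ (i,j)) = 0" using T off rs by auto
  show "nonneg_mat (blk_pm p T)" "nonneg_mat (blk_mp p T)"
    using T off unfolding nonneg_mat_def blk_pm_def blk_mp_def by auto
  show "\<forall>i<p. \<forall>j<p. i \<noteq> j \<longrightarrow> blk_pp p T $$ (i,j) \<ge> 0"
       "\<forall>i<q. \<forall>j<q. i \<noteq> j \<longrightarrow> blk_mm p T $$ (i,j) \<ge> 0"
    using T off unfolding blk_pp_def blk_mm_def by auto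
  show "\<forall>i<p. (\<Sum>j<p. blk_pp p T $$ (i,j)) + (\<Sum>j<q. blk_pm p T $$ (i,j)) = 0"
  proof (intro allI impI)
    fix i assume i: "i < p"
    have "(\<Sum>j<p. blk_pp p T $$ (i,j)) + (\<Sum>j<q. blk_pm p T $$ (i,j)) = (\<Sum>j<p. T $$ (i,j)) + (\<Sum>j<q. T $$ (i,j+p))"
      using T i unfolding blk_pp_def blk_pm_def by simp
    also have "\<dots> = (\<Sum>j<p+q. T $$ (i,j))" by (rule sum_split_pq[symmetric])
    finally show "(\<Sum>j<p. blk_pp p T $$ (i,j)) + (\<Sum>j<q. blk_pm p T $$ (i,j)) = 0" using rs i by simp
  qed
  show "\<forall>i<q. (\<Sum>j<p. blk_mp p T $$ (i,j)) + (\<Sum>j<q. blk_mm p T $$ (i,j)) = 0"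
  proof (intro allI impI)
    fix i assume i: "i < q"
    have "(\<Sum>j<p. blk_mp p T $$ (i,j)) + (\<Sum>j<q. blk_mm p T $$ (i,j)) = (\<Sum>j<p. T $$ (i+p,j)) + (\<Sum>j<q. T $$ (i+p,j+p))"
      using T i unfolding blk_mp_def blk_mm_def by simp
    also have "\<dots> = (\<Sum>j<p+q. T $$ (i+p,j))" by (rule sum_split_pq[symmetric])
    finally show "(\<Sum>j<p. blk_mp p T $$ (i,j)) + (\<Sum>j<q. blk_mm p T $$ (i,j)) = 0" using rs i by simp
  qed
qed

lemma qbd_G_col_zero:
  assumes "\<forall>j'<n. \<forall>j<p. Lm $$ (j',j) = 0" "i < n" "j < n" "j < p"
  shows "qbd_G n Lm L0 L1 $$ (i,j) = 0"
  using assms unfolding qbd_G_def by simp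

lemma zsdd_MA:
  fixes Tmm Tmp A :: "real mat"
  assumes Tmm: "Tmm \<in> carrier_mat q q" and Tmp: "Tmp \<in> carrier_mat q p" and A: "A \<in> carrier_mat p q"
    and nTmp: "nonneg_mat Tmp" and nA: "nonneg_mat A"
    and off: "\<forall>i<q. \<forall>j<q. i \<noteq> j \<longrightarrow> Tmm $$ (i,j) \<ge> 0"
    and rows: "\<forall>i<q. (\<Sum>j<p. Tmp $$ (i,j)) + (\<Sum>j<q. Tmm $$ (i,j)) = 0"
    and rA: "\<forall>r<p. (\<Sum>j<q. A $$ (r,j)) \<le> 1" and a: "a \<ge> 0"
  shows "zsdd q (1\<^sub>m q - a \<cdot>\<^sub>m (Tmm + Tmp * A))"
proof -
  have TA: "Tmp * A \<in> carrier_mat q q" using Tmp A by auto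
  have nTA: "nonneg_mat (Tmp * A)" using nTmp nA Tmp A by (intro nonneg_mult) auto
  have e: "(1\<^sub>m q - a \<cdot>\<^sub>m (Tmm + Tmp * A)) $$ (i,j) = (if i = j then 1 else 0) - a * (Tmm $$ (i,j) + (Tmp * A) $$ (i,j))"
    if "i < q" "j < q" for i j using that Tmm TA carrier_dims[OF Tmp] carrier_dims[OF A] by simp
  show ?thesis unfolding zsdd_def
  proof (intro conjI allI impI)
    show "1\<^sub>m q - a \<cdot>\<^sub>m (Tmm + Tmp * A) \<in> carrier_mat q q" using Tmm TA by (intro minus_carrier_mat) auto
  next
    fix i j assume ij: "i < q" "j < q" "i \<noteq> j"
    have "Tmm $$ (i,j) \<ge> 0" "(Tmp * A) $$ (i,j) \<ge> 0" using off ij nTA carrier_dims[OF Tmp] carrier_dims[OF A] unfolding nonneg_mat_def by auto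
    then show "(1\<^sub>m q - a \<cdot>\<^sub>m (Tmm + Tmp * A)) $$ (i,j) \<le> 0" unfolding e[OF ij(1,2)] using ij a by simp
  next
    fix i assume i: "i < q"
    have s1: "(\<Sum>j<q. (Tmp * A) $$ (i,j)) \<le> (\<Sum>r<p. Tmp $$ (i,r))"
    proof -
      have "(\<Sum>j<q. (Tmp * A) $$ (i,j)) = (\<Sum>j<q. \<Sum>r<p. Tmp $$ (i,r) * A $$ (r,j))"
        using Tmp A i by (intro sum.cong refl mat_mult_entry) auto
      also have "\<dots> = (\<Sum>r<p. Tmp $$ (i,r) * (\<Sum>j<q. A $$ (r,j)))" by (rule swap_mult)
      also have "\<dots> \<le> (\<Sum>r<p. Tmp $$ (i,r))"
      proof (rule sum_mono)
        fix r assume r: "r \<in> {..<p}"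
        have "Tmp $$ (i,r) \<ge> 0" using nTmp Tmp i r unfolding nonneg_mat_def by auto
        then show "Tmp $$ (i,r) * (\<Sum>j<q. A $$ (r,j)) \<le> Tmp $$ (i,r)" using rA r
          by (simp add: mult_left_le)
      qed
      finally show ?thesis .
    qed
    have "(\<Sum>j<q. (1\<^sub>m q - a \<cdot>\<^sub>m (Tmm + Tmp * A)) $$ (i,j)) = (\<Sum>j<q. (if i = j then 1 else 0)) - a * ((\<Sum>j<q. Tmm $$ (i,j)) + (\<Sum>j<q. (Tmp * A) $$ (i,j)))"
      using e i by (simp add: sum_subtractf sum.distrib sum_distrib_left[symmetric] distrib_left)
    also have "(\<Sum>j<q. (if i = j then 1 else 0)) = (1::real)" using i by simp
    finally have "(\<Sum>j<q. (1\<^sub>m q - a \<cdot>\<^sub>m (Tmm + Tmp * A)) $$ (i,j)) = 1 - a * ((\<Sum>j<q. Tmm $$ (i,j)) + (\<Sum>j<q. (Tmp * A) $$ (i,j)))" .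
    moreover have "(\<Sum>j<q. Tmm $$ (i,j)) + (\<Sum>j<q. (Tmp * A) $$ (i,j)) \<le> 0" using s1 rows i by auto
    ultimately show "(\<Sum>j<q. (1\<^sub>m q - a \<cdot>\<^sub>m (Tmm + Tmp * A)) $$ (i,j)) > 0" using a
      by (smt (verit) mult_nonneg_nonpos)
  qed
qed

lemma zsdd_R:
  fixes Tpp Tpm :: "real mat"
  assumes Tpp: "Tpp \<in> carrier_mat p p" and Tpm: "Tpm \<in> carrier_mat p q" and nTpm: "nonneg_mat Tpm"
    and off: "\<forall>i<p. \<forall>j<p. i \<noteq> j \<longrightarrow> Tpp $$ (i,j) \<ge> 0"
    and rows: "\<forall>i<p. (\<Sum>j<p. Tpp $$ (i,j)) + (\<Sum>j<q. Tpm $$ (i,j)) = 0" and b: "b \<ge> 0"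
  shows "zsdd p (1\<^sub>m p - b \<cdot>\<^sub>m Tpp)"
  unfolding zsdd_def
proof (intro conjI allI impI)
  show "1\<^sub>m p - b \<cdot>\<^sub>m Tpp \<in> carrier_mat p p" using Tpp by (intro minus_carrier_mat) auto
next
  fix i j assume ij: "i < p" "j < p" "i \<noteq> j"
  then show "(1\<^sub>m p - b \<cdot>\<^sub>m Tpp) $$ (i,j) \<le> 0" using off Tpp b by simp
next
  fix i assume i: "i < p"
  have "(\<Sum>j<p. (1\<^sub>m p - b \<cdot>\<^sub>m Tpp) $$ (i,j)) = (\<Sum>j<p. (if i = j then 1 else 0)) - b * (\<Sum>j<p. Tpp $$ (i,j))"
    using i Tpp by (simp add: sum_subtractf sum_distrib_left)
  also have "(\<Sum>j<p. (if i = j then 1 else 0)) = (1::real)" using i by simp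
  also have "(\<Sum>j<p. Tpp $$ (i,j)) = - (\<Sum>j<q. Tpm $$ (i,j))" using rows i by (simp add: eq_neg_iff_add_eq_0)
  finally have e: "(\<Sum>j<p. (1\<^sub>m p - b \<cdot>\<^sub>m Tpp) $$ (i,j)) = 1 + b * (\<Sum>j<q. Tpm $$ (i,j))" by simp
  have "(\<Sum>j<q. Tpm $$ (i,j)) \<ge> 0" using nTpm Tpm i unfolding nonneg_mat_def by (intro sum_nonneg) auto
  then show "(\<Sum>j<p. (1\<^sub>m p - b \<cdot>\<^sub>m Tpp) $$ (i,j)) > 0" unfolding e using b
    by (smt (verit) mult_nonneg_nonneg)
qed

lemma nonneg_IU:
  fixes Tmm Tmp A :: "real mat"
  assumes Tmm: "Tmm \<in> carrier_mat q q" and Tmp: "Tmp \<in> carrier_mat q p" and A: "A \<in> carrier_mat p q"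
    and nTmp: "nonneg_mat Tmp" and nA: "nonneg_mat A"
    and off: "\<forall>i<q. \<forall>j<q. i \<noteq> j \<longrightarrow> Tmm $$ (i,j) \<ge> 0"
    and dg: "\<forall>i<q. 1 + b * Tmm $$ (i,i) \<ge> 0" and b: "b \<ge> 0"
  shows "nonneg_mat (1\<^sub>m q + b \<cdot>\<^sub>m (Tmm + Tmp * A))"
  unfolding nonneg_mat_def
proof (intro allI impI)
  have TA: "Tmp * A \<in> carrier_mat q q" using Tmp A by auto
  have nTA: "nonneg_mat (Tmp * A)" using nTmp nA Tmp A by (intro nonneg_mult) auto
  fix i j assume ij: "i < dim_row (1\<^sub>m q + b \<cdot>\<^sub>m (Tmm + Tmp * A))" "j < dim_col (1\<^sub>m q + b \<cdot>\<^sub>m (Tmm + Tmp * A))"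
  then have ij': "i < q" "j < q" using Tmm TA by auto
  have t: "(Tmp * A) $$ (i,j) \<ge> 0" using nTA ij' carrier_dims[OF Tmp] carrier_dims[OF A] unfolding nonneg_mat_def by auto
  have e: "(1\<^sub>m q + b \<cdot>\<^sub>m (Tmm + Tmp * A)) $$ (i,j) = (if i = j then 1 else 0) + b * (Tmm $$ (i,j) + (Tmp * A) $$ (i,j))"
    using ij' Tmm TA carrier_dims[OF Tmp] carrier_dims[OF A] by simp
  show "(1\<^sub>m q + b \<cdot>\<^sub>m (Tmm + Tmp * A)) $$ (i,j) \<ge> 0"
  proof (cases "i = j")
    case True
    then show ?thesis unfolding e using dg ij' t b by (smt (verit) mult_nonneg_nonneg distrib_left)
  next
    case False
    then show ?thesis unfolding e using off ij' t b by simp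
  qed
qed

lemma nonneg_IT:
  fixes S :: "real mat"
  assumes S: "S \<in> carrier_mat k k"
    and off: "\<forall>i<k. \<forall>j<k. i \<noteq> j \<longrightarrow> S $$ (i,j) \<ge> 0"
    and dg: "\<forall>i<k. 1 + c * S $$ (i,i) \<ge> 0" and c: "c \<ge> 0"
  shows "nonneg_mat (1\<^sub>m k + c \<cdot>\<^sub>m S)"
  unfolding nonneg_mat_def
proof (intro allI impI)
  fix i j assume ij: "i < dim_row (1\<^sub>m k + c \<cdot>\<^sub>m S)" "j < dim_col (1\<^sub>m k + c \<cdot>\<^sub>m S)"
  then have ij': "i < k" "j < k" using S by auto
  show "(1\<^sub>m k + c \<cdot>\<^sub>m S) $$ (i,j) \<ge> 0"
  proof (cases "i = j")
    case True then show ?thesis using dg ij' S by simp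
  next
    case False then show ?thesis using off ij' S c by simp
  qed
qed

lemma mult_mono_right_nn:
  fixes X A A' :: "real mat"
  assumes "X \<in> carrier_mat r k" "A \<in> carrier_mat k c" "A' \<in> carrier_mat k c" "nonneg_mat X"
    and "\<forall>i<k. \<forall>j<c. A $$ (i,j) \<le> A' $$ (i,j)" "i < r" "j < c"
  shows "(X * A) $$ (i,j) \<le> (X * A') $$ (i,j)"
proof -
  have "(\<Sum>t<k. X $$ (i,t) * A $$ (t,j)) \<le> (\<Sum>t<k. X $$ (i,t) * A' $$ (t,j))"
    using assms unfolding nonneg_mat_def by (intro sum_mono mult_left_mono) auto
  then show ?thesis by (simp only: mat_mult_entry[OF assms(1,2,6,7)] mat_mult_entry[OF assms(1,3,6,7)])
qed

lemma mult_mono_left_nn: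
  fixes W A A' :: "real mat"
  assumes "A \<in> carrier_mat r k" "A' \<in> carrier_mat r k" "W \<in> carrier_mat k c" "nonneg_mat W"
    and "\<forall>i<r. \<forall>j<k. A $$ (i,j) \<le> A' $$ (i,j)" "i < r" "j < c"
  shows "(A * W) $$ (i,j) \<le> (A' * W) $$ (i,j)"
proof -
  have "(\<Sum>t<k. A $$ (i,t) * W $$ (t,j)) \<le> (\<Sum>t<k. A' $$ (i,t) * W $$ (t,j))"
    using assms unfolding nonneg_mat_def by (intro sum_mono mult_right_mono) auto
  then show ?thesis by (simp only: mat_mult_entry[OF assms(1,3,6,7)] mat_mult_entry[OF assms(2,3,6,7)])
qed

theorem theorem5:
  fixes p q :: nat and T Psi :: "real mat" and lam mu :: real
  assumes pq: "p \<ge> 1" "q \<ge> 1"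
    and gen: "is_generator (p + q) T"
    and Psi: "min_nonneg_riccati_sol p T Psi"
    and lam: "lam > 0" "\<forall>i<p+q. \<bar>T $$ (i,i)\<bar> \<le> lam"
    and mu: "mu > 0" "\<forall>i<p+q. \<bar>T $$ (i,i)\<bar> \<le> mu"
  shows
    "let n = p + q;
         Pl = 1\<^sub>m n + (1 / lam) \<cdot>\<^sub>m T;
         Pm = 1\<^sub>m n + (1 / mu) \<cdot>\<^sub>m T;
         U = blk_mm p T + blk_mp p T * Psi;
         W = (1\<^sub>m q + (1 / mu) \<cdot>\<^sub>m U) * minv (1\<^sub>m q - (1 / lam) \<cdot>\<^sub>m U);
         R = minv (1\<^sub>m p - (1 / mu) \<cdot>\<^sub>m blk_pp p T);
         C'm = (1/2) \<cdot>\<^sub>m four_block_mat (0\<^sub>m p p) (blk_pm p Pm) (0\<^sub>m q p) (blk_mm p Pm);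
         C'0 = (1/2) \<cdot>\<^sub>m four_block_mat (blk_pp p Pm) (blk_pm p Pl) (blk_mp p Pm) (blk_mm p Pl);
         C'1 = (1/2) \<cdot>\<^sub>m four_block_mat (blk_pp p Pl) (0\<^sub>m p q) (blk_mp p Pl) (0\<^sub>m q q);
         Cm = four_block_mat (0\<^sub>m p p) (R * blk_pm p Pm) (0\<^sub>m q p) W;
         C0 = four_block_mat (0\<^sub>m p p) (R * blk_pm p Pl) (0\<^sub>m q p) (0\<^sub>m q q);
         C1 = four_block_mat (R * blk_pp p Pl) (0\<^sub>m p q) (0\<^sub>m q p) (0\<^sub>m q q)
     in qbd_G n C'm C'0 C'1 = qbd_G n Cm C0 C1
      \<and> qbd_G n C'm C'0 C'1 = four_block_mat (0\<^sub>m p p) Psi (0\<^sub>m q p) W"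
proof -
  define n where "n = p + q"
  define a where "a = 1 / lam"
  define b where "b = 1 / mu"
  have a: "a > 0" and b: "b > 0" using lam mu unfolding a_def b_def by auto
  define Tpp where "Tpp = blk_pp p T"
  define Tpm where "Tpm = blk_pm p T"
  define Tmp where "Tmp = blk_mp p T"
  define Tmm where "Tmm = blk_mm p T"
  note gb = gen_blocks[OF gen]
  have T: "T \<in> carrier_mat (p+q) (p+q)" by (rule gb(1))
  have cT: "Tpp \<in> carrier_mat p p" "Tpm \<in> carrier_mat p q" "Tmp \<in> carrier_mat q p" "Tmm \<in> carrier_mat q q"
    unfolding Tpp_def Tpm_def Tmp_def Tmm_def using blk_carrier[OF T] by auto
  have nTpm: "nonneg_mat Tpm" and nTmp: "nonneg_mat Tmp" using gb(2,3) unfolding Tpm_def Tmp_def by auto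
  have offpp: "\<forall>i<p. \<forall>j<p. i \<noteq> j \<longrightarrow> Tpp $$ (i,j) \<ge> 0" using gb(4) unfolding Tpp_def .
  have offmm: "\<forall>i<q. \<forall>j<q. i \<noteq> j \<longrightarrow> Tmm $$ (i,j) \<ge> 0" using gb(5) unfolding Tmm_def .
  have rowp: "\<forall>i<p. (\<Sum>j<p. Tpp $$ (i,j)) + (\<Sum>j<q. Tpm $$ (i,j)) = 0" using gb(6) unfolding Tpp_def Tpm_def .
  have rowm: "\<forall>i<q. (\<Sum>j<p. Tmp $$ (i,j)) + (\<Sum>j<q. Tmm $$ (i,j)) = 0" using gb(7) unfolding Tmp_def Tmm_def .
  have diagT: "\<forall>i<p+q. 1 + c * T $$ (i,i) \<ge> 0" if "c > 0" "\<forall>i<p+q. \<bar>T $$ (i,i)\<bar> \<le> 1 / c" for c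
  proof (intro allI impI)
    fix i assume i: "i < p+q"
    have "- (1 / c) \<le> T $$ (i,i)" using that(2) i by (smt (verit))
    then have "c * (- (1 / c)) \<le> c * T $$ (i,i)" using that(1) by (intro mult_left_mono) auto
    then show "1 + c * T $$ (i,i) \<ge> 0" using that(1) by simp
  qed
  have dTa: "\<forall>i<p+q. 1 + a * T $$ (i,i) \<ge> 0" using diagT[OF a] lam unfolding a_def by simp
  have dTb: "\<forall>i<p+q. 1 + b * T $$ (i,i) \<ge> 0" using diagT[OF b] mu unfolding b_def by simp
  have dpp: "\<forall>i<p. 1 + c * Tpp $$ (i,i) \<ge> 0" if "\<forall>i<p+q. 1 + c * T $$ (i,i) \<ge> 0" for c
    using that T unfolding Tpp_def blk_pp_def by auto
  have dmm: "\<forall>i<q. 1 + c * Tmm $$ (i,i) \<ge> 0" if "\<forall>i<p+q. 1 + c * T $$ (i,i) \<ge> 0" for c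
    using that T unfolding Tmm_def blk_mm_def by auto
  define Pl where "Pl = 1\<^sub>m (p+q) + a \<cdot>\<^sub>m T"
  define Pm where "Pm = 1\<^sub>m (p+q) + b \<cdot>\<^sub>m T"
  have cP: "Pl \<in> carrier_mat (p+q) (p+q)" "Pm \<in> carrier_mat (p+q) (p+q)" unfolding Pl_def Pm_def using T by auto
  have bPl: "blk_pp p Pl = 1\<^sub>m p + a \<cdot>\<^sub>m Tpp" "blk_pm p Pl = a \<cdot>\<^sub>m Tpm" "blk_mp p Pl = a \<cdot>\<^sub>m Tmp" "blk_mm p Pl = 1\<^sub>m q + a \<cdot>\<^sub>m Tmm"
    unfolding Pl_def Tpp_def Tpm_def Tmp_def Tmm_def by (rule blk_P[OF T])+
  have bPm: "blk_pp p Pm = 1\<^sub>m p + b \<cdot>\<^sub>m Tpp" "blk_pm p Pm = b \<cdot>\<^sub>m Tpm" "blk_mp p Pm = b \<cdot>\<^sub>m Tmp" "blk_mm p Pm = 1\<^sub>m q + b \<cdot>\<^sub>m Tmm"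
    unfolding Pm_def Tpp_def Tpm_def Tmp_def Tmm_def by (rule blk_P[OF T])+
  have Pnn: "(1\<^sub>m (p+q) + c \<cdot>\<^sub>m T) $$ (i,j) \<ge> 0" if "\<forall>i<p+q. 1 + c * T $$ (i,i) \<ge> 0" "c > 0" "i < p+q" "j < p+q" for c i j
  proof (cases "i = j")
    case True then show ?thesis using that T by simp
  next
    case False then show ?thesis using that T gb(8) by simp
  qed
  have Pl_nn: "\<And>i j. i < p+q \<Longrightarrow> j < p+q \<Longrightarrow> Pl $$ (i,j) \<ge> 0" unfolding Pl_def using Pnn[OF dTa a] by auto
  have Pm_nn: "\<And>i j. i < p+q \<Longrightarrow> j < p+q \<Longrightarrow> Pm $$ (i,j) \<ge> 0" unfolding Pm_def using Pnn[OF dTb b] by auto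
  have Prow: "(\<Sum>j<p+q. (1\<^sub>m (p+q) + c \<cdot>\<^sub>m T) $$ (i,j)) = 1" if "i < p+q" for c i
  proof -
    have "(\<Sum>j<p+q. (1\<^sub>m (p+q) + c \<cdot>\<^sub>m T) $$ (i,j)) = (\<Sum>j<p+q. (if i = j then 1 else 0)) + c * (\<Sum>j<p+q. T $$ (i,j))"
      using that T by (simp add: sum.distrib sum_distrib_left)
    also have "\<dots> = 1" using that gb(9) by simp
    finally show ?thesis .
  qed
  have Pl_row: "\<And>i. i < p+q \<Longrightarrow> (\<Sum>j<p+q. Pl $$ (i,j)) = 1" unfolding Pl_def using Prow by auto
  have Pm_row: "\<And>i. i < p+q \<Longrightarrow> (\<Sum>j<p+q. Pm $$ (i,j)) = 1" unfolding Pm_def using Prow by auto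
  define Cpm where "Cpm = (1/2) \<cdot>\<^sub>m four_block_mat (0\<^sub>m p p) (blk_pm p Pm) (0\<^sub>m q p) (blk_mm p Pm)"
  define Cp0 where "Cp0 = (1/2) \<cdot>\<^sub>m four_block_mat (blk_pp p Pm) (blk_pm p Pl) (blk_mp p Pm) (blk_mm p Pl)"
  define Cp1 where "Cp1 = (1/2) \<cdot>\<^sub>m four_block_mat (blk_pp p Pl) (0\<^sub>m p q) (blk_mp p Pl) (0\<^sub>m q q)"
  note bl = blk_carrier[OF cP(1)] blk_carrier[OF cP(2)]
  have cFm: "four_block_mat (0\<^sub>m p p) (blk_pm p Pm) (0\<^sub>m q p) (blk_mm p Pm) \<in> carrier_mat (p+q) (p+q)"
    "four_block_mat (blk_pp p Pm) (blk_pm p Pl) (blk_mp p Pm) (blk_mm p Pl) \<in> carrier_mat (p+q) (p+q)"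
    "four_block_mat (blk_pp p Pl) (0\<^sub>m p q) (blk_mp p Pl) (0\<^sub>m q q) \<in> carrier_mat (p+q) (p+q)"
    using bl by auto
  have cC': "Cpm \<in> carrier_mat (p+q) (p+q)" "Cp0 \<in> carrier_mat (p+q) (p+q)" "Cp1 \<in> carrier_mat (p+q) (p+q)"
    unfolding Cpm_def Cp0_def Cp1_def using cFm by auto
  have Cpm_e: "Cpm $$ (i,j) = (if j < p then 0 else (1/2) * Pm $$ (i,j))" if "i < p+q" "j < p+q" for i j
    unfolding Cpm_def using that cP bl by (auto simp: blk_pm_def blk_mm_def)
  have Cp0_e: "Cp0 $$ (i,j) = (1/2) * (if j < p then Pm $$ (i,j) else Pl $$ (i,j))" if "i < p+q" "j < p+q" for i j
    unfolding Cp0_def using that cP bl by (auto simp: blk_pp_def blk_pm_def blk_mp_def blk_mm_def)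
  have Cp1_e: "Cp1 $$ (i,j) = (if j < p then (1/2) * Pl $$ (i,j) else 0)" if "i < p+q" "j < p+q" for i j
    unfolding Cp1_def using that cP bl by (auto simp: blk_pp_def blk_mp_def)
  have nC': "nonnegL (p+q) Cpm" "nonnegL (p+q) Cp0" "nonnegL (p+q) Cp1"
    unfolding nonnegL_def
  proof (safe intro!: cC')
    fix i j assume ij: "i < p+q" "j < p+q"
    show "Cpm $$ (i,j) \<ge> 0" using Cpm_e[OF ij] Pm_nn[OF ij] by simp
    show "Cp0 $$ (i,j) \<ge> 0" using Cp0_e[OF ij] Pm_nn[OF ij] Pl_nn[OF ij] by (cases "j < p") simp_all
    show "Cp1 $$ (i,j) \<ge> 0" using Cp1_e[OF ij] Pl_nn[OF ij] by simp
  qed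
  have rC': "\<forall>i<p+q. (\<Sum>j<p+q. Cpm $$ (i,j) + Cp0 $$ (i,j) + Cp1 $$ (i,j)) \<le> 1"
  proof (intro allI impI)
    fix i assume i: "i < p+q"
    have "(\<Sum>j<p+q. Cpm $$ (i,j) + Cp0 $$ (i,j) + Cp1 $$ (i,j)) = (\<Sum>j<p+q. (1/2) * Pm $$ (i,j) + (1/2) * Pl $$ (i,j))"
      using i by (intro sum.cong refl) (auto simp: Cpm_e Cp0_e Cp1_e)
    also have "\<dots> = 1" using Pm_row[OF i] Pl_row[OF i] by (simp add: sum.distrib sum_divide_distrib[symmetric])
    finally show "(\<Sum>j<p+q. Cpm $$ (i,j) + Cp0 $$ (i,j) + Cp1 $$ (i,j)) \<le> 1" by simp
  qed
  have bC': "blk_pp p Cpm = 0\<^sub>m p p" "blk_mp p Cpm = 0\<^sub>m q p"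
    "blk_pm p Cpm = (1/2) \<cdot>\<^sub>m (b \<cdot>\<^sub>m Tpm)" "blk_mm p Cpm = (1/2) \<cdot>\<^sub>m (1\<^sub>m q + b \<cdot>\<^sub>m Tmm)"
    "blk_pp p Cp0 = (1/2) \<cdot>\<^sub>m (1\<^sub>m p + b \<cdot>\<^sub>m Tpp)" "blk_pm p Cp0 = (1/2) \<cdot>\<^sub>m (a \<cdot>\<^sub>m Tpm)"
    "blk_mp p Cp0 = (1/2) \<cdot>\<^sub>m (b \<cdot>\<^sub>m Tmp)" "blk_mm p Cp0 = (1/2) \<cdot>\<^sub>m (1\<^sub>m q + a \<cdot>\<^sub>m Tmm)"
    "blk_pp p Cp1 = (1/2) \<cdot>\<^sub>m (1\<^sub>m p + a \<cdot>\<^sub>m Tpp)" "blk_pm p Cp1 = 0\<^sub>m p q"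
    "blk_mp p Cp1 = (1/2) \<cdot>\<^sub>m (a \<cdot>\<^sub>m Tmp)" "blk_mm p Cp1 = 0\<^sub>m q q"
  proof -
    have cb: "1\<^sub>m p + a \<cdot>\<^sub>m Tpp \<in> carrier_mat p p" "a \<cdot>\<^sub>m Tpm \<in> carrier_mat p q" "a \<cdot>\<^sub>m Tmp \<in> carrier_mat q p"
      "1\<^sub>m q + a \<cdot>\<^sub>m Tmm \<in> carrier_mat q q"
      "1\<^sub>m p + b \<cdot>\<^sub>m Tpp \<in> carrier_mat p p" "b \<cdot>\<^sub>m Tpm \<in> carrier_mat p q" "b \<cdot>\<^sub>m Tmp \<in> carrier_mat q p"
      "1\<^sub>m q + b \<cdot>\<^sub>m Tmm \<in> carrier_mat q q" using cT by auto
    note f1 = blk_of_four[OF zero_carrier_mat cb(6) zero_carrier_mat cb(8)]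
    note f2 = blk_of_four[OF cb(5) cb(2) cb(7) cb(4)]
    note f3 = blk_of_four[OF cb(1) zero_carrier_mat cb(3) zero_carrier_mat]
    show "blk_pp p Cpm = 0\<^sub>m p p" "blk_mp p Cpm = 0\<^sub>m q p"
      "blk_pm p Cpm = (1/2) \<cdot>\<^sub>m (b \<cdot>\<^sub>m Tpm)" "blk_mm p Cpm = (1/2) \<cdot>\<^sub>m (1\<^sub>m q + b \<cdot>\<^sub>m Tmm)"
      "blk_pp p Cp0 = (1/2) \<cdot>\<^sub>m (1\<^sub>m p + b \<cdot>\<^sub>m Tpp)" "blk_pm p Cp0 = (1/2) \<cdot>\<^sub>m (a \<cdot>\<^sub>m Tpm)"
      "blk_mp p Cp0 = (1/2) \<cdot>\<^sub>m (b \<cdot>\<^sub>m Tmp)" "blk_mm p Cp0 = (1/2) \<cdot>\<^sub>m (1\<^sub>m q + a \<cdot>\<^sub>m Tmm)"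
      "blk_pp p Cp1 = (1/2) \<cdot>\<^sub>m (1\<^sub>m p + a \<cdot>\<^sub>m Tpp)" "blk_pm p Cp1 = 0\<^sub>m p q"
      "blk_mp p Cp1 = (1/2) \<cdot>\<^sub>m (a \<cdot>\<^sub>m Tmp)" "blk_mm p Cp1 = 0\<^sub>m q q"
      unfolding Cpm_def Cp0_def Cp1_def blk_smult[OF cFm(1)] blk_smult[OF cFm(2)] blk_smult[OF cFm(3)]
      unfolding bPl bPm f1 f2 f3 by simp_all
  qed
  define G1 where "G1 = qbd_G (p+q) Cpm Cp0 Cp1"
  note rs1 = qbd_G_rowsum[OF nC' rC']
  have cG1: "G1 \<in> carrier_mat (p+q) (p+q)" unfolding G1_def by (rule qbd_G_carrier)
  have eqG1: "G1 = Cpm + Cp0 * G1 + Cp1 * (G1 * G1)" unfolding G1_def by (rule qbd_G_equation[OF nC' rs1(1)])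
  have nG1: "nonnegL (p+q) G1" unfolding G1_def by (rule qbd_G_nonneg[OF nC' rs1(1)])
  have rowG1: "\<And>i. i < p+q \<Longrightarrow> (\<Sum>j<p+q. G1 $$ (i,j)) \<le> 1" unfolding G1_def by (rule rs1(2))
  have col1: "G1 $$ (i,j) = 0" if "i < p+q" "j < p" for i j
    unfolding G1_def using that Cpm_e by (intro qbd_G_col_zero) auto
  have bG1: "blk_pp p G1 = 0\<^sub>m p p" "blk_mp p G1 = 0\<^sub>m q p"
    using cG1 col1 by (auto intro!: eq_matI simp: blk_pp_def blk_mp_def)
  define A1 where "A1 = blk_pm p G1"
  define B1 where "B1 = blk_mm p G1"
  have cA1: "A1 \<in> carrier_mat p q" and cB1: "B1 \<in> carrier_mat q q" unfolding A1_def B1_def using blk_carrier[OF cG1] by auto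
  have nA1: "nonneg_mat A1" using nG1 cG1 unfolding A1_def nonnegL_def nonneg_mat_def blk_pm_def by auto
  have rA1: "\<forall>r<p. (\<Sum>j<q. A1 $$ (r,j)) \<le> 1"
  proof (intro allI impI)
    fix r assume r: "r < p"
    have "(\<Sum>j<q. A1 $$ (r,j)) = (\<Sum>j<q. G1 $$ (r, j+p))" unfolding A1_def blk_pm_def using cG1 r by simp
    also have "\<dots> = (\<Sum>j<p+q. G1 $$ (r,j))" using sum_split_pq[where f="\<lambda>j. G1 $$ (r,j)" and p=p and q=q] col1 r by simp
    also have "\<dots> \<le> 1" using rowG1 r by simp
    finally show "(\<Sum>j<q. A1 $$ (r,j)) \<le> 1" .
  qed
  note rb1 = RHS_blocks[OF cC'(1) cC'(2) cC'(3) cG1 bG1 bC'(1,2) bC'(10,12)]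
  have E1: "(1/2) \<cdot>\<^sub>m (b \<cdot>\<^sub>m Tpm) + ((1/2) \<cdot>\<^sub>m (1\<^sub>m p + b \<cdot>\<^sub>m Tpp)) * A1 + ((1/2) \<cdot>\<^sub>m (a \<cdot>\<^sub>m Tpm)) * B1
      + ((1/2) \<cdot>\<^sub>m (1\<^sub>m p + a \<cdot>\<^sub>m Tpp)) * (A1 * B1) = A1"
    using arg_cong[OF eqG1, of "blk_pm p"] rb1(3) unfolding bC' A1_def B1_def by simp
  have E2: "(1/2) \<cdot>\<^sub>m (1\<^sub>m q + b \<cdot>\<^sub>m Tmm) + ((1/2) \<cdot>\<^sub>m (b \<cdot>\<^sub>m Tmp)) * A1 + ((1/2) \<cdot>\<^sub>m (1\<^sub>m q + a \<cdot>\<^sub>m Tmm)) * B1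
      + ((1/2) \<cdot>\<^sub>m (a \<cdot>\<^sub>m Tmp)) * (A1 * B1) = B1"
    using arg_cong[OF eqG1, of "blk_mm p"] rb1(4) unfolding bC' A1_def B1_def by simp
  have E1c: "A1 * (1\<^sub>m q - B1) = (Tpm + Tpp * A1) * (b \<cdot>\<^sub>m 1\<^sub>m q + a \<cdot>\<^sub>m B1)"
    using E1 canon_pm(1)[OF cT(1,2) cA1 cB1] by simp
  have E2c: "(1\<^sub>m q - a \<cdot>\<^sub>m (Tmm + Tmp * A1)) * B1 = 1\<^sub>m q + b \<cdot>\<^sub>m (Tmm + Tmp * A1)"
    using E2 canon_mm[OF cT(4,3) cA1 cB1] by simp
  have z1: "zsdd q (1\<^sub>m q - a \<cdot>\<^sub>m (Tmm + Tmp * A1))"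
    by (rule zsdd_MA[OF cT(4,3) cA1 nTmp nA1 offmm rowm rA1]) (use a in simp)
  define N1 where "N1 = minv (1\<^sub>m q - a \<cdot>\<^sub>m (Tmm + Tmp * A1))"
  note inv1 = zsdd_inverse[OF z1, folded N1_def]
  have cU1: "Tmm + Tmp * A1 \<in> carrier_mat q q" using cT cA1 by auto
  note Q1 = Qalg[OF cU1 inv1(3) inv1(1) inv1(2)]
  have B1eq: "B1 = (1\<^sub>m q + b \<cdot>\<^sub>m (Tmm + Tmp * A1)) * N1" by (rule Q1(4)[OF cB1 E2c])
  have B1M: "B1 * (1\<^sub>m q - a \<cdot>\<^sub>m (Tmm + Tmp * A1)) = 1\<^sub>m q + b \<cdot>\<^sub>m (Tmm + Tmp * A1)"
    using Q1(3) B1eq by simp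
  have ric1: "Tpm + A1 * Tmm + Tpp * A1 + A1 * Tmp * A1 = 0\<^sub>m p q"
    using Palg[OF cA1 cT(1,2,3,4) inv1(3) cB1 inv1(1) B1M] E1c a b by simp
  have dT: "dim_row T - p = q" using T by simp
  have rsPsi: "riccati_sol p T Psi" and minPsi: "\<And>X. riccati_sol p T X \<Longrightarrow> le_mat Psi X"
    using Psi unfolding min_nonneg_riccati_sol_def by auto
  have cPsi: "Psi \<in> carrier_mat p q" and nPsi: "nonneg_mat Psi"
    and ricPsi: "Tpm + Psi * Tmm + Tpp * Psi + Psi * Tmp * Psi = 0\<^sub>m p q"
    using rsPsi unfolding riccati_sol_def dT Tpm_def Tmm_def Tpp_def Tmp_def by auto
  have rsA1: "riccati_sol p T A1" unfolding riccati_sol_def dT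
    using cA1 nA1 ric1 unfolding Tpm_def Tmm_def Tpp_def Tmp_def by auto
  have PsiA1: "\<forall>i<p. \<forall>j<q. Psi $$ (i,j) \<le> A1 $$ (i,j)"
    using minPsi[OF rsA1] cPsi unfolding le_mat_def by auto
  have rPsi: "\<forall>r<p. (\<Sum>j<q. Psi $$ (r,j)) \<le> 1"
  proof (intro allI impI)
    fix r assume r: "r < p"
    have "(\<Sum>j<q. Psi $$ (r,j)) \<le> (\<Sum>j<q. A1 $$ (r,j))" using PsiA1 r by (intro sum_mono) auto
    then show "(\<Sum>j<q. Psi $$ (r,j)) \<le> 1" using rA1 r by (meson order_trans)
  qed
  have z0: "zsdd q (1\<^sub>m q - a \<cdot>\<^sub>m (Tmm + Tmp * Psi))"
    by (rule zsdd_MA[OF cT(4,3) cPsi nTmp nPsi offmm rowm rPsi]) (use a in simp)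
  define N0 where "N0 = minv (1\<^sub>m q - a \<cdot>\<^sub>m (Tmm + Tmp * Psi))"
  note inv0 = zsdd_inverse[OF z0, folded N0_def]
  have cU0: "Tmm + Tmp * Psi \<in> carrier_mat q q" using cT cPsi by auto
  note Q0 = Qalg[OF cU0 inv0(3) inv0(1) inv0(2)]
  define W where "W = (1\<^sub>m q + b \<cdot>\<^sub>m (Tmm + Tmp * Psi)) * N0"
  have cW: "W \<in> carrier_mat q q" unfolding W_def by (rule mult_carrier_mat[OF add_carrier_mat[OF smult_carrier_mat[OF cU0]] inv0(3)])
  have WM: "W * (1\<^sub>m q - a \<cdot>\<^sub>m (Tmm + Tmp * Psi)) = 1\<^sub>m q + b \<cdot>\<^sub>m (Tmm + Tmp * Psi)"
    unfolding W_def by (rule Q0(3))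
  have MW: "(1\<^sub>m q - a \<cdot>\<^sub>m (Tmm + Tmp * Psi)) * W = 1\<^sub>m q + b \<cdot>\<^sub>m (Tmm + Tmp * Psi)"
    unfolding W_def by (rule Q0(2))
  have nW: "nonneg_mat W"
  proof -
    have "nonneg_mat (1\<^sub>m q + b \<cdot>\<^sub>m (Tmm + Tmp * Psi))"
      by (rule nonneg_IU[OF cT(4,3) cPsi nTmp nPsi offmm dmm[OF dTb]]) (use b in simp)
    moreover have "nonneg_mat N0" using inv0(4) inv0(3) unfolding nonneg_mat_def by auto
    ultimately show ?thesis unfolding W_def using inv0(3) cPsi by (intro nonneg_mult) auto
  qed
  have EP1: "(1/2) \<cdot>\<^sub>m (b \<cdot>\<^sub>m Tpm) + ((1/2) \<cdot>\<^sub>m (1\<^sub>m p + b \<cdot>\<^sub>m Tpp)) * Psi + ((1/2) \<cdot>\<^sub>m (a \<cdot>\<^sub>m Tpm)) * W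
      + ((1/2) \<cdot>\<^sub>m (1\<^sub>m p + a \<cdot>\<^sub>m Tpp)) * (Psi * W) = Psi"
  proof -
    have "Psi * (1\<^sub>m q - W) = (Tpm + Tpp * Psi) * (b \<cdot>\<^sub>m 1\<^sub>m q + a \<cdot>\<^sub>m W)"
      using Palg[OF cPsi cT(1,2,3,4) inv0(3) cW inv0(1) WM] ricPsi a b by simp
    then show ?thesis using canon_pm(1)[OF cT(1,2) cPsi cW] by simp
  qed
  have EP2: "(1/2) \<cdot>\<^sub>m (1\<^sub>m q + b \<cdot>\<^sub>m Tmm) + ((1/2) \<cdot>\<^sub>m (b \<cdot>\<^sub>m Tmp)) * Psi + ((1/2) \<cdot>\<^sub>m (1\<^sub>m q + a \<cdot>\<^sub>m Tmm)) * W
      + ((1/2) \<cdot>\<^sub>m (a \<cdot>\<^sub>m Tmp)) * (Psi * W) = W"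
    using MW canon_mm[OF cT(4,3) cPsi cW] by simp
  define E where "E = four_block_mat (0\<^sub>m p p) Psi (0\<^sub>m q p) W"
  have cE: "E \<in> carrier_mat (p+q) (p+q)" unfolding E_def using cPsi cW by auto
  note bE = blk_of_four[OF zero_carrier_mat cPsi zero_carrier_mat cW, folded E_def]
  have nE: "nonnegL (p+q) E" unfolding nonnegL_iff E_def
    using cPsi cW nPsi nW by (auto intro!: nonneg_four nonneg_zero)
  note rbE = RHS_blocks[OF cC'(1) cC'(2) cC'(3) cE bE(1) bE(3) bC'(1,2) bC'(10,12)]
  have RE: "Cpm + Cp0 * E + Cp1 * (E * E) = E"
  proof -
    have c: "Cpm + Cp0 * E + Cp1 * (E * E) \<in> carrier_mat (p+q) (p+q)" using cC' cE by auto
    have "Cpm + Cp0 * E + Cp1 * (E * E) = four_block_mat (0\<^sub>m p p) Psi (0\<^sub>m q p) W"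
      by (subst blk_decomp[OF c]) (simp only: rbE bE bC' EP1 EP2)
    then show ?thesis unfolding E_def .
  qed
  have upE: "\<forall>i<p+q. \<forall>j<p+q. (Cpm + Cp0 * E + Cp1 * (E * E)) $$ (i,j) \<le> E $$ (i,j)" unfolding RE by simp
  have G1E: "\<And>i j. i < p+q \<Longrightarrow> j < p+q \<Longrightarrow> G1 $$ (i,j) \<le> E $$ (i,j)"
    unfolding G1_def by (rule qbd_G_upper(2)[OF nC' nE upE])
  have A1Psi: "A1 = Psi"
  proof (rule eq_matI)
    fix i j assume ij: "i < dim_row Psi" "j < dim_col Psi"
    then have ij': "i < p" "j < q" using cPsi by auto
    have "A1 $$ (i,j) = G1 $$ (i, j+p)" unfolding A1_def blk_pm_def using ij' cG1 by simp
    also have "\<dots> \<le> E $$ (i, j+p)" using G1E ij' by simp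
    also have "\<dots> = Psi $$ (i,j)" unfolding E_def using ij' cPsi cW by simp
    finally show "A1 $$ (i,j) = Psi $$ (i,j)" using PsiA1 ij' by (simp add: antisym)
  qed (use cA1 cPsi in auto)
  have B1W: "B1 = W" using B1eq unfolding W_def N1_def N0_def A1Psi .
  have G1eq: "G1 = E" unfolding E_def using blk_decomp[OF cG1] bG1 A1Psi B1W unfolding A1_def B1_def by simp
  define R where "R = minv (1\<^sub>m p - b \<cdot>\<^sub>m Tpp)"
  have zR: "zsdd p (1\<^sub>m p - b \<cdot>\<^sub>m Tpp)" by (rule zsdd_R[OF cT(1,2) nTpm offpp rowp]) (use b in simp)
  note invR = zsdd_inverse[OF zR, folded R_def]
  have nR: "nonneg_mat R" using invR(3,4) unfolding nonneg_mat_def by auto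
  define Cm where "Cm = four_block_mat (0\<^sub>m p p) (R * blk_pm p Pm) (0\<^sub>m q p) W"
  define C0 where "C0 = four_block_mat (0\<^sub>m p p) (R * blk_pm p Pl) (0\<^sub>m q p) (0\<^sub>m q q)"
  define C1 where "C1 = four_block_mat (R * blk_pp p Pl) (0\<^sub>m p q) (0\<^sub>m q p) (0\<^sub>m q q)"
  have cRb: "R * (b \<cdot>\<^sub>m Tpm) \<in> carrier_mat p q" "R * (a \<cdot>\<^sub>m Tpm) \<in> carrier_mat p q"
    "R * (1\<^sub>m p + a \<cdot>\<^sub>m Tpp) \<in> carrier_mat p p"
    using invR(3) cT by (auto intro: mult_carrier_mat)
  have Cdefs: "Cm = four_block_mat (0\<^sub>m p p) (R * (b \<cdot>\<^sub>m Tpm)) (0\<^sub>m q p) W"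
    "C0 = four_block_mat (0\<^sub>m p p) (R * (a \<cdot>\<^sub>m Tpm)) (0\<^sub>m q p) (0\<^sub>m q q)"
    "C1 = four_block_mat (R * (1\<^sub>m p + a \<cdot>\<^sub>m Tpp)) (0\<^sub>m p q) (0\<^sub>m q p) (0\<^sub>m q q)"
    unfolding Cm_def C0_def C1_def bPl bPm by simp_all
  have cC: "Cm \<in> carrier_mat (p+q) (p+q)" "C0 \<in> carrier_mat (p+q) (p+q)" "C1 \<in> carrier_mat (p+q) (p+q)"
    unfolding Cdefs using cRb cW by auto
  note f1 = blk_of_four[OF zero_carrier_mat cRb(1) zero_carrier_mat cW]
  note f2 = blk_of_four[OF zero_carrier_mat cRb(2) zero_carrier_mat zero_carrier_mat]
  note f3 = blk_of_four[OF cRb(3) zero_carrier_mat zero_carrier_mat zero_carrier_mat]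
  have bC: "blk_pp p Cm = 0\<^sub>m p p" "blk_mp p Cm = 0\<^sub>m q p" "blk_pm p Cm = R * (b \<cdot>\<^sub>m Tpm)" "blk_mm p Cm = W"
    "blk_pp p C0 = 0\<^sub>m p p" "blk_pm p C0 = R * (a \<cdot>\<^sub>m Tpm)" "blk_mp p C0 = 0\<^sub>m q p" "blk_mm p C0 = 0\<^sub>m q q"
    "blk_pp p C1 = R * (1\<^sub>m p + a \<cdot>\<^sub>m Tpp)" "blk_pm p C1 = 0\<^sub>m p q" "blk_mp p C1 = 0\<^sub>m q p" "blk_mm p C1 = 0\<^sub>m q q"
    unfolding Cdefs f1 f2 f3 by simp_all
  have nRb: "nonneg_mat (R * (b \<cdot>\<^sub>m Tpm))" "nonneg_mat (R * (a \<cdot>\<^sub>m Tpm))" "nonneg_mat (R * (1\<^sub>m p + a \<cdot>\<^sub>m Tpp))"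
  proof -
    have "nonneg_mat (1\<^sub>m p + a \<cdot>\<^sub>m Tpp)"
      by (rule nonneg_IT[OF cT(1) offpp dpp[OF dTa]]) (use a in simp)
    then show "nonneg_mat (R * (1\<^sub>m p + a \<cdot>\<^sub>m Tpp))" using nR invR(3) cT by (intro nonneg_mult) auto
    show "nonneg_mat (R * (b \<cdot>\<^sub>m Tpm))" using nR invR(3) cT nTpm b by (intro nonneg_mult nonneg_smult) auto
    show "nonneg_mat (R * (a \<cdot>\<^sub>m Tpm))" using nR invR(3) cT nTpm a by (intro nonneg_mult nonneg_smult) auto
  qed
  have nC: "nonnegL (p+q) Cm" "nonnegL (p+q) C0" "nonnegL (p+q) C1"
    unfolding nonnegL_iff using cC unfolding Cdefs
    using cRb cW nRb nW by (auto intro!: nonneg_four nonneg_zero)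
  have CC: "(blk_pm p Cm + blk_pp p C0 * A + blk_pm p C0 * B + blk_pp p C1 * (A * B) = A) \<longleftrightarrow>
    ((1/2) \<cdot>\<^sub>m (b \<cdot>\<^sub>m Tpm) + ((1/2) \<cdot>\<^sub>m (1\<^sub>m p + b \<cdot>\<^sub>m Tpp)) * A + ((1/2) \<cdot>\<^sub>m (a \<cdot>\<^sub>m Tpm)) * B
      + ((1/2) \<cdot>\<^sub>m (1\<^sub>m p + a \<cdot>\<^sub>m Tpp)) * (A * B) = A)"
    if cA: "A \<in> carrier_mat p q" and cB: "B \<in> carrier_mat q q" for A B
  proof -
    have "blk_pm p Cm + blk_pp p C0 * A + blk_pm p C0 * B + blk_pp p C1 * (A * B)
       = R * (b \<cdot>\<^sub>m Tpm) + (R * (a \<cdot>\<^sub>m Tpm)) * B + (R * (1\<^sub>m p + a \<cdot>\<^sub>m Tpp)) * (A * B)"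
      unfolding bC using cA cB cRb by simp
    then show ?thesis using canon_C[OF cT(1,2) cA cB invR(3) invR(2) invR(1)] canon_pm(2)[OF cT(1,2) cA cB] by simp
  qed
  have CCm: "blk_mm p Cm + blk_mp p C0 * A + blk_mm p C0 * B + blk_mp p C1 * (A * B) = W"
    if cA: "A \<in> carrier_mat p q" and cB: "B \<in> carrier_mat q q" for A B
    unfolding bC using cA cB cW by simp
  have Ccol: "\<forall>j'<p+q. \<forall>j<p. Cm $$ (j',j) = 0" unfolding Cdefs using cRb cW by auto
  note rbE2 = RHS_blocks[OF cC(1) cC(2) cC(3) cE bE(1) bE(3) bC(1,2) bC(10,12)]
  have RE2: "Cm + C0 * E + C1 * (E * E) = E"
  proof -
    have c: "Cm + C0 * E + C1 * (E * E) \<in> carrier_mat (p+q) (p+q)" using cC cE by auto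
    have pm: "blk_pm p (Cm + C0 * E + C1 * (E * E)) = Psi" unfolding rbE2(3) bE using CC[OF cPsi cW] EP1 by simp
    have mm: "blk_mm p (Cm + C0 * E + C1 * (E * E)) = W" unfolding rbE2(4) bE using CCm[OF cPsi cW] by simp
    have "Cm + C0 * E + C1 * (E * E) = four_block_mat (0\<^sub>m p p) Psi (0\<^sub>m q p) W"
      by (subst blk_decomp[OF c]) (simp only: rbE2(1,2) pm mm)
    then show ?thesis unfolding E_def .
  qed
  have upE2: "\<forall>i<p+q. \<forall>j<p+q. (Cm + C0 * E + C1 * (E * E)) $$ (i,j) \<le> E $$ (i,j)" unfolding RE2 by simp
  note up2 = qbd_G_upper[OF nC nE upE2]
  define G2 where "G2 = qbd_G (p+q) Cm C0 C1"
  have cG2: "G2 \<in> carrier_mat (p+q) (p+q)" unfolding G2_def by (rule qbd_G_carrier)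
  have G2E: "\<And>i j. i < p+q \<Longrightarrow> j < p+q \<Longrightarrow> G2 $$ (i,j) \<le> E $$ (i,j)" unfolding G2_def by (rule up2(2))
  have eqG2: "G2 = Cm + C0 * G2 + C1 * (G2 * G2)" unfolding G2_def by (rule qbd_G_equation[OF nC up2(1)])
  have nG2: "nonnegL (p+q) G2" unfolding G2_def by (rule qbd_G_nonneg[OF nC up2(1)])
  have col2: "G2 $$ (i,j) = 0" if "i < p+q" "j < p" for i j
    unfolding G2_def using that Ccol by (intro qbd_G_col_zero) auto
  have bG2: "blk_pp p G2 = 0\<^sub>m p p" "blk_mp p G2 = 0\<^sub>m q p"
    using cG2 col2 by (auto intro!: eq_matI simp: blk_pp_def blk_mp_def)
  define A2 where "A2 = blk_pm p G2"
  define B2 where "B2 = blk_mm p G2"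
  have cA2: "A2 \<in> carrier_mat p q" and cB2: "B2 \<in> carrier_mat q q" unfolding A2_def B2_def using blk_carrier[OF cG2] by auto
  have nA2: "nonneg_mat A2" using nG2 cG2 unfolding A2_def nonnegL_def nonneg_mat_def blk_pm_def by auto
  note rb2 = RHS_blocks[OF cC(1) cC(2) cC(3) cG2 bG2 bC(1,2) bC(10,12)]
  have B2W: "B2 = W" using arg_cong[OF eqG2, of "blk_mm p"] rb2(4) CCm[OF cA2 cB2] unfolding A2_def B2_def by simp
  have EA2: "(1/2) \<cdot>\<^sub>m (b \<cdot>\<^sub>m Tpm) + ((1/2) \<cdot>\<^sub>m (1\<^sub>m p + b \<cdot>\<^sub>m Tpp)) * A2 + ((1/2) \<cdot>\<^sub>m (a \<cdot>\<^sub>m Tpm)) * B2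
      + ((1/2) \<cdot>\<^sub>m (1\<^sub>m p + a \<cdot>\<^sub>m Tpp)) * (A2 * B2) = A2"
    using arg_cong[OF eqG2, of "blk_pm p"] rb2(3) CC[OF cA2 cB2] unfolding A2_def B2_def by simp
  have A2Psi: "\<forall>i<p. \<forall>j<q. A2 $$ (i,j) \<le> Psi $$ (i,j)"
  proof (intro allI impI)
    fix i j assume ij': "i < p" "j < q"
    have "A2 $$ (i,j) = G2 $$ (i, j+p)" unfolding A2_def blk_pm_def using ij' cG2 by simp
    also have "\<dots> \<le> E $$ (i, j+p)" using G2E ij' by simp
    also have "\<dots> = Psi $$ (i,j)" unfolding E_def using ij' cPsi cW by simp
    finally show "A2 $$ (i,j) \<le> Psi $$ (i,j)" .
  qed
  note rbG = RHS_blocks[OF cC'(1) cC'(2) cC'(3) cG2 bG2 bC'(1,2) bC'(10,12)]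
  have cRG: "Cpm + Cp0 * G2 + Cp1 * (G2 * G2) \<in> carrier_mat (p+q) (p+q)" using cC' cG2 by auto
  have supG2: "\<forall>i<p+q. \<forall>j<p+q. (Cpm + Cp0 * G2 + Cp1 * (G2 * G2)) $$ (i,j) \<le> G2 $$ (i,j)"
  proof (rule le_from_blocks[OF cRG cG2])
    show "\<forall>i<p. \<forall>j<p. blk_pp p (Cpm + Cp0 * G2 + Cp1 * (G2 * G2)) $$ (i,j) \<le> blk_pp p G2 $$ (i,j)"
      unfolding rbG(1) bG2 by simp
    show "\<forall>i<q. \<forall>j<p. blk_mp p (Cpm + Cp0 * G2 + Cp1 * (G2 * G2)) $$ (i,j) \<le> blk_mp p G2 $$ (i,j)"
      unfolding rbG(2) bG2 by simp
    show "\<forall>i<p. \<forall>j<q. blk_pm p (Cpm + Cp0 * G2 + Cp1 * (G2 * G2)) $$ (i,j) \<le> blk_pm p G2 $$ (i,j)"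
      unfolding rbG(3) bC' using EA2 unfolding A2_def B2_def by simp
    show "\<forall>i<q. \<forall>j<q. blk_mm p (Cpm + Cp0 * G2 + Cp1 * (G2 * G2)) $$ (i,j) \<le> blk_mm p G2 $$ (i,j)"
    proof (intro allI impI)
      fix i j assume ij: "i < q" "j < q"
      let ?X1 = "(1/2) \<cdot>\<^sub>m (b \<cdot>\<^sub>m Tmp)" and ?X2 = "(1/2) \<cdot>\<^sub>m (a \<cdot>\<^sub>m Tmp)"
      let ?K1 = "(1/2) \<cdot>\<^sub>m (1\<^sub>m q + b \<cdot>\<^sub>m Tmm)" and ?K2 = "((1/2) \<cdot>\<^sub>m (1\<^sub>m q + a \<cdot>\<^sub>m Tmm)) * W"
      have cX: "?X1 \<in> carrier_mat q p" "?X2 \<in> carrier_mat q p" using cT by auto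
      have nX: "nonneg_mat ?X1" "nonneg_mat ?X2" using nTmp a b by (auto intro!: nonneg_smult)
      have cK: "?K1 \<in> carrier_mat q q" "?K2 \<in> carrier_mat q q" using cT cW by auto
      have eA: "(?K1 + ?X1 * A + ?K2 + ?X2 * (A * W)) $$ (i,j) = ?K1 $$ (i,j) + (?X1 * A) $$ (i,j) + ?K2 $$ (i,j) + (?X2 * (A * W)) $$ (i,j)"
        if "A \<in> carrier_mat p q" for A using that ij cX cK cW cT carrier_dims[OF that] carrier_dims[OF cW] carrier_dims[OF cT(3)] carrier_dims[OF cT(4)] by simp
      have m1: "(?X1 * A2) $$ (i,j) \<le> (?X1 * Psi) $$ (i,j)"
        by (rule mult_mono_right_nn[OF cX(1) cA2 cPsi nX(1) A2Psi ij])
      have AW: "\<forall>i<p. \<forall>j<q. (A2 * W) $$ (i,j) \<le> (Psi * W) $$ (i,j)"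
        using mult_mono_left_nn[OF cA2 cPsi cW nW A2Psi] by auto
      have m2: "(?X2 * (A2 * W)) $$ (i,j) \<le> (?X2 * (Psi * W)) $$ (i,j)"
        using cA2 cPsi cW by (intro mult_mono_right_nn[OF cX(2) _ _ nX(2) AW ij]) auto
      have "blk_mm p (Cpm + Cp0 * G2 + Cp1 * (G2 * G2)) $$ (i,j) = (?K1 + ?X1 * A2 + ?K2 + ?X2 * (A2 * W)) $$ (i,j)"
        unfolding rbG(4) bC' A2_def[symmetric] B2_def[symmetric] B2W by simp
      also have "\<dots> \<le> (?K1 + ?X1 * Psi + ?K2 + ?X2 * (Psi * W)) $$ (i,j)"
        unfolding eA[OF cA2] eA[OF cPsi] using m1 m2 by simp
      also have "\<dots> = W $$ (i,j)" using EP2 by simp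
      finally show "blk_mm p (Cpm + Cp0 * G2 + Cp1 * (G2 * G2)) $$ (i,j) \<le> blk_mm p G2 $$ (i,j)"
        unfolding B2_def[symmetric] B2W .
    qed
  qed
  have G1G2: "\<And>i j. i < p+q \<Longrightarrow> j < p+q \<Longrightarrow> G1 $$ (i,j) \<le> G2 $$ (i,j)"
    unfolding G1_def by (rule qbd_G_upper(2)[OF nC' nG2 supG2])
  have G2eq: "G2 = E"
  proof (rule eq_matI)
    fix i j assume ij: "i < dim_row E" "j < dim_col E"
    then have ij': "i < p+q" "j < p+q" using cE by auto
    show "G2 $$ (i,j) = E $$ (i,j)" using G2E[OF ij'] G1G2[OF ij'] G1eq by (simp add: antisym)
  qed (use cG2 cE in auto)
  have fin1: "qbd_G (p+q) Cpm Cp0 Cp1 = E" using G1eq unfolding G1_def .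
  have fin2: "qbd_G (p+q) Cm C0 C1 = E" using G2eq unfolding G2_def .
  show ?thesis
    using fin1 fin2 unfolding Let_def Cpm_def Cp0_def Cp1_def Cm_def C0_def C1_def R_def E_def W_def N0_def
      Pl_def Pm_def a_def b_def Tpp_def Tpm_def Tmp_def Tmm_def by simp
qed

end
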